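(* Let $X$ be a connected cubic graph, let $\{u,v\}$ be an edge of $X$, let $G\leq\mathrm{Aut}\,X$ be an $s$-regular group of automorphisms with $s\in\{2,3,5\}$, and let $H=G_u$ be the stabilizer of $u$ in $G$. Then $X$ has a connected $G$-split $2$-cover with a transitive complement if and only if there is an element $b\in G$ interchanging $u$ and $v$ and $H$ has a subgroup $L$ of index $2$ such that $$b^2\in L,\qquad \langle b,L\rangle=G,\qquad |L:L^b\cap L|=3.$$ Moreover, in this case the covering graph is isomorphic to the coset graph $\mathrm{Cos}(G,L,LbL)$.
   Context: Graphs are finite and simple; maps are composed on the right. An $s$-arc is a sequence $(v_0,\dots,v_s)$ of vertices with $v_{i-1}\sim v_i$ and $v_{i-1}\neq v_{i+1}$; $G$ is $s$-regular if it acts regularly on $s$-arcs. A regular covering projection $\wp\colon\tilde X\to X$ is a surjective graph homomorphism, locally bijective on neighbourhoods, whose group $\mathrm{CT}(\wp)$ of covering transformations (automorphisms $c$ with $c\wp=\wp$) acts regularly on fibres; a $2$-cover has $\mathrm{CT}(\wp)\cong\mathbb{Z}_2$. A lift of $g\in\mathrm{Aut}\,X$ is $\tilde g\in\mathrm{Aut}\,\tilde X$ with $\wp g=\tilde g\wp$; $\wp$ is $G$-split if all elements of $G$ lift and $\mathrm{CT}(\wp)$ has a complement $\bar G$ in the lifted group $\tilde G$ (the group of all lifts); a complement is transitive if it is transitive on $V(\tilde X)$. $L^b=b^{-1}Lb$. For a group $G$, subgroup $L$, and a union $D$ of double cosets of $L$ with $D^{-1}=D$, the coset graph $\mathrm{Cos}(G,L,D)$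 has vertex set the right cosets of $L$ in $G$, with $Lg$ adjacent to $Ldg$ for all $d\in D$. *)

theory Defs
  imports "HOL-Algebra.Algebra"
begin

definition sgraph :: "'v set \<Rightarrow> ('v \<Rightarrow> 'v \<Rightarrow> bool) \<Rightarrow> bool" where
  "sgraph V E \<longleftrightarrow> finite V \<and> (\<forall>x y. E x y \<longrightarrow> x \<in> V \<and> y \<in> V)
     \<and> (\<forall>x y. E x y \<longrightarrow> E y x) \<and> (\<forall>x. \<not> E x x)"

definition nbhd :: "('v \<Rightarrow> 'v \<Rightarrow> bool) \<Rightarrow> 'v \<Rightarrow> 'v set" where
  "nbhd E x = {y. E x y}"

definition cubic :: "'v set \<Rightarrow> ('v \<Rightarrow> 'v \<Rightarrow> bool) \<Rightarrow> bool" where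
  "cubic V E \<longleftrightarrow> (\<forall>x\<in>V. card (nbhd E x) = 3)"

definition connected_graph :: "'v set \<Rightarrow> ('v \<Rightarrow> 'v \<Rightarrow> bool) \<Rightarrow> bool" where
  "connected_graph V E \<longleftrightarrow> V \<noteq> {} \<and> (\<forall>x\<in>V. \<forall>y\<in>V. E\<^sup>*\<^sup>* x y)"

definition graph_iso :: "'a set \<Rightarrow> ('a \<Rightarrow> 'a \<Rightarrow> bool) \<Rightarrow> 'b set \<Rightarrow> ('b \<Rightarrow> 'b \<Rightarrow> bool) \<Rightarrow> bool" where
  "graph_iso V1 E1 V2 E2 \<longleftrightarrow>
     (\<exists>f. bij_betw f V1 V2 \<and> (\<forall>x\<in>V1. \<forall>y\<in>V1. E1 x y \<longleftrightarrow> E2 (f x) (f y)))"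

definition graph_aut :: "'v set \<Rightarrow> ('v \<Rightarrow> 'v \<Rightarrow> bool) \<Rightarrow> ('v \<Rightarrow> 'v) set" where
  "graph_aut V E = {f. bij_betw f V V \<and> (\<forall>x. x \<notin> V \<longrightarrow> f x = x)
        \<and> (\<forall>x\<in>V. \<forall>y\<in>V. E x y \<longleftrightarrow> E (f x) (f y))}"

text \<open>A set of permutations as a monoid structure; maps are composed on the right,
so the product g h means "first g, then h", i.e. the function h \<circ> g.\<close>
definition pgrp :: "('v \<Rightarrow> 'v) set \<Rightarrow> ('v \<Rightarrow> 'v) monoid" where
  "pgrp S = \<lparr>carrier = S, monoid.mult = (\<lambda>g h. h \<circ> g), one = id\<rparr>"

definition aut_group :: "'v set \<Rightarrow> ('v \<Rightarrow> 'v \<Rightarrow> bool) \<Rightarrow> ('v \<Rightarrow> 'v) set \<Rightarrow> bool" where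
  "aut_group V E G \<longleftrightarrow> G \<subseteq> graph_aut V E \<and> group (pgrp G)"

definition s_arc :: "'v set \<Rightarrow> ('v \<Rightarrow> 'v \<Rightarrow> bool) \<Rightarrow> nat \<Rightarrow> 'v list \<Rightarrow> bool" where
  "s_arc V E s xs \<longleftrightarrow> length xs = Suc s \<and> set xs \<subseteq> V
     \<and> (\<forall>i<s. E (xs ! i) (xs ! Suc i))
     \<and> (\<forall>i. Suc (Suc i) \<le> s \<longrightarrow> xs ! i \<noteq> xs ! Suc (Suc i))"

definition s_regular :: "'v set \<Rightarrow> ('v \<Rightarrow> 'v \<Rightarrow> bool) \<Rightarrow> nat \<Rightarrow> ('v \<Rightarrow> 'v) set \<Rightarrow> bool" where
  "s_regular V E s G \<longleftrightarrow>
     (\<forall>a b. s_arc V E s a \<and> s_arc V E s b \<longrightarrow> (\<exists>!g. g \<in> G \<and> map g a = b))"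

definition stabilizer :: "('v \<Rightarrow> 'v) set \<Rightarrow> 'v \<Rightarrow> ('v \<Rightarrow> 'v) set" where
  "stabilizer G u = {g\<in>G. g u = u}"

definition covering_proj ::
  "'w set \<Rightarrow> ('w \<Rightarrow> 'w \<Rightarrow> bool) \<Rightarrow> 'v set \<Rightarrow> ('v \<Rightarrow> 'v \<Rightarrow> bool) \<Rightarrow> ('w \<Rightarrow> 'v) \<Rightarrow> bool" where
  "covering_proj Vt Et V E p \<longleftrightarrow>
     p ` Vt = V \<and> (\<forall>x y. Et x y \<longrightarrow> E (p x) (p y))
     \<and> (\<forall>x\<in>Vt. bij_betw p (nbhd Et x) (nbhd E (p x)))"

definition cov_trans ::
  "'w set \<Rightarrow> ('w \<Rightarrow> 'w \<Rightarrow> bool) \<Rightarrow> ('w \<Rightarrow> 'v) \<Rightarrow> ('w \<Rightarrow> 'w) set" where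
  "cov_trans Vt Et p = {c \<in> graph_aut Vt Et. \<forall>x\<in>Vt. p (c x) = p x}"

definition regular_covering ::
  "'w set \<Rightarrow> ('w \<Rightarrow> 'w \<Rightarrow> bool) \<Rightarrow> 'v set \<Rightarrow> ('v \<Rightarrow> 'v \<Rightarrow> bool) \<Rightarrow> ('w \<Rightarrow> 'v) \<Rightarrow> bool" where
  "regular_covering Vt Et V E p \<longleftrightarrow> covering_proj Vt Et V E p
     \<and> (\<forall>x\<in>Vt. \<forall>y\<in>Vt. p x = p y \<longrightarrow> (\<exists>!c. c \<in> cov_trans Vt Et p \<and> c x = y))"

definition two_cover ::
  "'w set \<Rightarrow> ('w \<Rightarrow> 'w \<Rightarrow> bool) \<Rightarrow> 'v set \<Rightarrow> ('v \<Rightarrow> 'v \<Rightarrow> bool) \<Rightarrow> ('w \<Rightarrow> 'v) \<Rightarrow> bool" where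
  "two_cover Vt Et V E p \<longleftrightarrow> sgraph Vt Et \<and> regular_covering Vt Et V E p
     \<and> pgrp (cov_trans Vt Et p) \<cong> integer_mod_group 2"

text \<open>gt is a lift of g: p g = gt p (right composition), i.e. p (gt x) = g (p x).\<close>
definition is_lift ::
  "'w set \<Rightarrow> ('w \<Rightarrow> 'w \<Rightarrow> bool) \<Rightarrow> ('w \<Rightarrow> 'v) \<Rightarrow> ('v \<Rightarrow> 'v) \<Rightarrow> ('w \<Rightarrow> 'w) \<Rightarrow> bool" where
  "is_lift Vt Et p g gt \<longleftrightarrow> gt \<in> graph_aut Vt Et \<and> (\<forall>x\<in>Vt. p (gt x) = g (p x))"

definition lifted_group ::
  "'w set \<Rightarrow> ('w \<Rightarrow> 'w \<Rightarrow> bool) \<Rightarrow> ('w \<Rightarrow> 'v) \<Rightarrow> ('v \<Rightarrow> 'v) set \<Rightarrow> ('w \<Rightarrow> 'w) set" where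
  "lifted_group Vt Et p G = {gt. \<exists>g\<in>G. is_lift Vt Et p g gt}"

definition is_complement ::
  "'w set \<Rightarrow> ('w \<Rightarrow> 'w \<Rightarrow> bool) \<Rightarrow> ('w \<Rightarrow> 'v) \<Rightarrow> ('v \<Rightarrow> 'v) set \<Rightarrow> ('w \<Rightarrow> 'w) set \<Rightarrow> bool" where
  "is_complement Vt Et p G Gb \<longleftrightarrow>
     subgroup Gb (pgrp (lifted_group Vt Et p G))
     \<and> Gb \<inter> cov_trans Vt Et p = {id}
     \<and> cov_trans Vt Et p <#>\<^bsub>pgrp (lifted_group Vt Et p G)\<^esub> Gb = lifted_group Vt Et p G"

definition split_cover_transitive_complement ::
  "'w set \<Rightarrow> ('w \<Rightarrow> 'w \<Rightarrow> bool) \<Rightarrow> 'v set \<Rightarrow> ('v \<Rightarrow> 'v \<Rightarrow> bool) \<Rightarrow> ('v \<Rightarrow> 'v) set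
     \<Rightarrow> ('w \<Rightarrow> 'v) \<Rightarrow> bool" where
  "split_cover_transitive_complement Vt Et V E G p \<longleftrightarrow>
     (\<forall>g\<in>G. \<exists>gt. is_lift Vt Et p g gt)
     \<and> (\<exists>Gb. is_complement Vt Et p G Gb \<and> (\<forall>x\<in>Vt. \<forall>y\<in>Vt. \<exists>c\<in>Gb. c x = y))"

definition good_cover ::
  "'w set \<Rightarrow> ('w \<Rightarrow> 'w \<Rightarrow> bool) \<Rightarrow> 'v set \<Rightarrow> ('v \<Rightarrow> 'v \<Rightarrow> bool) \<Rightarrow> ('v \<Rightarrow> 'v) set
     \<Rightarrow> ('w \<Rightarrow> 'v) \<Rightarrow> bool" where
  "good_cover Vt Et V E G p \<longleftrightarrow> two_cover Vt Et V E p \<and> connected_graph Vt Et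
     \<and> split_cover_transitive_complement Vt Et V E G p"

definition sub_index :: "('v \<Rightarrow> 'v) set \<Rightarrow> ('v \<Rightarrow> 'v) set \<Rightarrow> ('v \<Rightarrow> 'v) set \<Rightarrow> nat" where
  "sub_index G A B = card (rcosets\<^bsub>(pgrp G)\<lparr>carrier := A\<rparr>\<^esub> B)"

definition conj_sub :: "('v \<Rightarrow> 'v) set \<Rightarrow> ('v \<Rightarrow> 'v) set \<Rightarrow> ('v \<Rightarrow> 'v) \<Rightarrow> ('v \<Rightarrow> 'v) set" where
  "conj_sub G L b = {inv\<^bsub>pgrp G\<^esub> b \<otimes>\<^bsub>pgrp G\<^esub> l \<otimes>\<^bsub>pgrp G\<^esub> b | l. l \<in> L}"

definition cos_vertices :: "('v \<Rightarrow> 'v) set \<Rightarrow> ('v \<Rightarrow> 'v) set \<Rightarrow> ('v \<Rightarrow> 'v) set set" where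
  "cos_vertices G L = rcosets\<^bsub>pgrp G\<^esub> L"

definition cos_adj :: "('v \<Rightarrow> 'v) set \<Rightarrow> ('v \<Rightarrow> 'v) set \<Rightarrow> ('v \<Rightarrow> 'v) set
     \<Rightarrow> ('v \<Rightarrow> 'v) set \<Rightarrow> ('v \<Rightarrow> 'v) set \<Rightarrow> bool" where
  "cos_adj G L D A B \<longleftrightarrow> (\<exists>g\<in>G. \<exists>d\<in>D.
      A = L #>\<^bsub>pgrp G\<^esub> g \<and> B = L #>\<^bsub>pgrp G\<^esub> (d \<otimes>\<^bsub>pgrp G\<^esub> g))"

definition double_coset :: "('v \<Rightarrow> 'v) set \<Rightarrow> ('v \<Rightarrow> 'v) set \<Rightarrow> ('v \<Rightarrow> 'v) \<Rightarrow> ('v \<Rightarrow> 'v) set" where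
  "double_coset G L b = L <#>\<^bsub>pgrp G\<^esub> {b} <#>\<^bsub>pgrp G\<^esub> L"

definition cover_condition ::
  "('v \<Rightarrow> 'v) set \<Rightarrow> 'v \<Rightarrow> 'v \<Rightarrow> ('v \<Rightarrow> 'v) \<Rightarrow> ('v \<Rightarrow> 'v) set \<Rightarrow> bool" where
  "cover_condition G u v b L \<longleftrightarrow>
     b \<in> G \<and> b u = v \<and> b v = u
     \<and> subgroup L (pgrp G) \<and> L \<subseteq> stabilizer G u
     \<and> sub_index G (stabilizer G u) L = 2
     \<and> b \<otimes>\<^bsub>pgrp G\<^esub> b \<in> L
     \<and> generate (pgrp G) (insert b L) = G
     \<and> sub_index G L (conj_sub G L b \<inter> L) = 3"

end

theory Submission
  imports Defs
begin

lemma pgrp_carrier[simp]: "carrier (pgrp S) = S"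
  by (simp add: pgrp_def)
lemma pgrp_mult: "x \<otimes>\<^bsub>pgrp S\<^esub> y = y \<circ> x"
  by (simp add: pgrp_def)
lemma pgrp_one: "\<one>\<^bsub>pgrp S\<^esub> = id"
  by (simp add: pgrp_def)

lemma ga_in: "f \<in> graph_aut V E \<Longrightarrow> x \<in> V \<Longrightarrow> f x \<in> V"
  by (auto simp: graph_aut_def bij_betw_def)
lemma ga_out: "f \<in> graph_aut V E \<Longrightarrow> x \<notin> V \<Longrightarrow> f x = x"
  unfolding graph_aut_def by blast
lemma ga_adj: "f \<in> graph_aut V E \<Longrightarrow> x \<in> V \<Longrightarrow> y \<in> V \<Longrightarrow> E (f x) (f y) = E x y"
  unfolding graph_aut_def by blast
lemma ga_adj2: "sgraph V E \<Longrightarrow> f \<in> graph_aut V E \<Longrightarrow> E x y \<Longrightarrow> E (f x) (f y)"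
  unfolding graph_aut_def sgraph_def by blast
lemma ga_inj: "f \<in> graph_aut V E \<Longrightarrow> f x = f y \<Longrightarrow> x = y"
proof -
  assume f: "f \<in> graph_aut V E" and e: "f x = f y"
  have inj: "inj_on f V" using f by (simp add: graph_aut_def bij_betw_def)
  show "x = y"
  proof (cases "x \<in> V")
    case True
    show ?thesis
    proof (cases "y \<in> V")
      case True
      then show ?thesis using \<open>x \<in> V\<close> inj e by (simp add: inj_on_def)
    next
      case False
      then have "f y = y" using ga_out[OF f] by simp
      moreover have "f x \<in> V" using ga_in[OF f True] .
      ultimately show ?thesis using e False by simp
    qed
  next
    case False
    then have fx: "f x = x" using ga_out[OF f] by simp
    show ?thesis
    proof (cases "y \<in> V")
      case True
      then have "f y \<in> V" using ga_in[OF f] by simp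
      then show ?thesis using e fx False by simp
    next
      case False
      then show ?thesis using ga_out[OF f] fx e by simp
    qed
  qed
qed
lemma ga_surj: "f \<in> graph_aut V E \<Longrightarrow> \<exists>x. f x = y"
proof -
  assume f: "f \<in> graph_aut V E"
  show ?thesis
  proof (cases "y \<in> V")
    case True
    have "f ` V = V" using f by (simp add: graph_aut_def bij_betw_def)
    then show ?thesis using True by (metis imageE)
  next
    case False then show ?thesis using f ga_out by metis
  qed
qed
lemma ga_bij: "f \<in> graph_aut V E \<Longrightarrow> bij f"
  by (metis bijI injI surjI ga_inj ga_surj)
lemma ga_id: "id \<in> graph_aut V E"
  by (simp add: graph_aut_def)
lemma ga_comp: "f \<in> graph_aut V E \<Longrightarrow> g \<in> graph_aut V E \<Longrightarrow> g \<circ> f \<in> graph_aut V E"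
proof -
  assume f: "f \<in> graph_aut V E" and g: "g \<in> graph_aut V E"
  have bf: "bij_betw f V V" using f unfolding graph_aut_def by blast
  have bg: "bij_betw g V V" using g unfolding graph_aut_def by blast
  have "bij_betw (g \<circ> f) V V" by (rule bij_betw_trans[OF bf bg])
  moreover have "\<forall>x. x \<notin> V \<longrightarrow> (g \<circ> f) x = x" using ga_out[OF f] ga_out[OF g] by simp
  moreover have "\<forall>x\<in>V. \<forall>y\<in>V. E x y \<longleftrightarrow> E ((g \<circ> f) x) ((g \<circ> f) y)"
    using ga_adj[OF f] ga_adj[OF g] ga_in[OF f] by simp
  ultimately show ?thesis unfolding graph_aut_def by blast
qed
lemma ga_invf: "f \<in> graph_aut V E \<Longrightarrow> inv_into UNIV f \<in> graph_aut V E"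
proof -
  assume f: "f \<in> graph_aut V E"
  have b: "bij f" using ga_bij f .
  have bV: "bij_betw f V V" using f by (simp add: graph_aut_def)
  have 1: "\<And>x. inv_into UNIV f (f x) = x" using b by (simp add: bij_def)
  have 2: "\<And>x. f (inv_into UNIV f x) = x" using b by (simp add: bij_def surj_f_inv_f)
  have m: "\<And>x. x \<in> V \<Longrightarrow> inv_into UNIV f x \<in> V"
    using f 2 ga_out by metis
  have "bij_betw (inv_into UNIV f) V V"
  proof (rule bij_betwI')
    show "\<And>x y. x \<in> V \<Longrightarrow> y \<in> V \<Longrightarrow> (inv_into UNIV f x = inv_into UNIV f y) = (x = y)"
      using 2 by metis
    show "\<And>x. x \<in> V \<Longrightarrow> inv_into UNIV f x \<in> V" by (rule m)
    show "\<And>y. y \<in> V \<Longrightarrow> \<exists>x\<in>V. y = inv_into UNIV f x"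
      using 1 ga_in[OF f] by metis
  qed
  moreover have "\<forall>x. x \<notin> V \<longrightarrow> inv_into UNIV f x = x" using f 1 ga_out by metis
  moreover have "\<forall>x\<in>V. \<forall>y\<in>V. E x y \<longleftrightarrow> E (inv_into UNIV f x) (inv_into UNIV f y)"
  proof (intro ballI)
    fix x y assume "x \<in> V" "y \<in> V"
    then have "inv_into UNIV f x \<in> V" "inv_into UNIV f y \<in> V" using calculation(1) by (auto simp: bij_betw_def)
    then show "E x y \<longleftrightarrow> E (inv_into UNIV f x) (inv_into UNIV f y)"
      using ga_adj[OF f \<open>inv_into UNIV f x \<in> V\<close> \<open>inv_into UNIV f y \<in> V\<close>] 2 by simp
  qed
  ultimately show ?thesis by (simp add: graph_aut_def)
qed

lemma ga_finite: "finite V \<Longrightarrow> finite (graph_aut V E)"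
proof -
  assume fin: "finite V"
  have "inj_on (\<lambda>f. restrict f V) (graph_aut V E)"
  proof (rule inj_onI)
    fix f g assume f: "f \<in> graph_aut V E" and g: "g \<in> graph_aut V E" and eq: "restrict f V = restrict g V"
    show "f = g"
    proof
      fix x show "f x = g x"
        using eq f g ga_out by (metis restrict_apply')
    qed
  qed
  moreover have "(\<lambda>f. restrict f V) ` graph_aut V E \<subseteq> V \<rightarrow>\<^sub>E V"
    using ga_in by (auto simp: PiE_def extensional_def)
  ultimately show ?thesis
  proof -
    have "finite (V \<rightarrow>\<^sub>E V)" using fin by (simp add: finite_PiE)
    then have "finite ((\<lambda>f. restrict f V) ` graph_aut V E)"
      using \<open>(\<lambda>f. restrict f V) ` graph_aut V E \<subseteq> V \<rightarrow>\<^sub>E V\<close> finite_subset by blast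
    then show ?thesis using \<open>inj_on _ _\<close> finite_imageD by blast
  qed
qed

locale cgraph =
  fixes V :: "'v set" and E :: "'v \<Rightarrow> 'v \<Rightarrow> bool" and G :: "('v \<Rightarrow> 'v) set"
    and u v :: 'v and s :: nat
  assumes sg: "sgraph V E" and conn: "connected_graph V E" and cub: "cubic V E"
    and euv: "E u v" and ag: "aut_group V E G" and sin: "s \<in> {2, 3, 5}"
    and sreg: "s_regular V E s G"

sublocale cgraph \<subseteq> Gr: group "pgrp G"
  using ag by (simp add: aut_group_def)

context cgraph
begin

abbreviation mul (infixl "\<cdot>" 70) where "a \<cdot> b \<equiv> a \<otimes>\<^bsub>pgrp G\<^esub> b"
abbreviation gi where "gi a \<equiv> inv\<^bsub>pgrp G\<^esub> a"
abbreviation H where "H \<equiv> stabilizer G u"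

lemma GA: "g \<in> G \<Longrightarrow> g \<in> graph_aut V E"
  using ag by (auto simp: aut_group_def)

lemma app_mul: "(a \<cdot> b) x = b (a x)"
  by (simp add: pgrp_mult)

lemma one_eq: "\<one>\<^bsub>pgrp G\<^esub> = id"
  by (simp add: pgrp_one)

lemma one_app: "\<one>\<^bsub>pgrp G\<^esub> x = x"
  by (simp add: pgrp_one)

lemma one_G: "id \<in> G"
  using Gr.one_closed by (simp add: pgrp_one)

lemma gi_app1: "g \<in> G \<Longrightarrow> gi g (g x) = x"
proof -
  assume g: "g \<in> G"
  have "g \<cdot> gi g = \<one>\<^bsub>pgrp G\<^esub>" using g by simp
  then have "(g \<cdot> gi g) x = x" by (simp add: one_app)
  then show ?thesis by (simp add: app_mul)
qed

lemma gi_app2: "g \<in> G \<Longrightarrow> g (gi g x) = x"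
proof -
  assume g: "g \<in> G"
  have "gi g \<cdot> g = \<one>\<^bsub>pgrp G\<^esub>" using g by simp
  then have "(gi g \<cdot> g) x = x" by (simp add: one_app)
  then show ?thesis by (simp add: app_mul)
qed

lemma gi_G: "g \<in> G \<Longrightarrow> gi g \<in> G"
  using Gr.inv_closed by simp

lemma mul_G: "a \<in> G \<Longrightarrow> b \<in> G \<Longrightarrow> a \<cdot> b \<in> G"
  using Gr.m_closed by simp

lemma G_in: "g \<in> G \<Longrightarrow> x \<in> V \<Longrightarrow> g x \<in> V"
  by (rule ga_in[OF GA])

lemma G_inj: "g \<in> G \<Longrightarrow> g x = g y \<Longrightarrow> x = y"
  by (rule ga_inj[OF GA])

lemma G_adj: "g \<in> G \<Longrightarrow> E x y \<Longrightarrow> E (g x) (g y)"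
  by (rule ga_adj2[OF sg GA])

lemma G_adj_iff: "g \<in> G \<Longrightarrow> E (g x) (g y) = E x y"
proof -
  assume g: "g \<in> G"
  have "E (g x) (g y) \<Longrightarrow> E x y"
  proof -
    assume "E (g x) (g y)"
    then have "E (gi g (g x)) (gi g (g y))" using G_adj gi_G g by blast
    then show ?thesis using gi_app1 g by simp
  qed
  then show ?thesis using G_adj g by blast
qed

lemma E_V: "E x y \<Longrightarrow> x \<in> V \<and> y \<in> V"
  using sg by (simp add: sgraph_def)

lemma E_sym: "E x y \<Longrightarrow> E y x"
  using sg by (simp add: sgraph_def)

lemma E_irr: "\<not> E x x"
  using sg by (simp add: sgraph_def)

lemma uV: "u \<in> V" and vV: "v \<in> V" and uv: "u \<noteq> v"
  using E_V E_irr euv by auto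

lemma finV: "finite V"
  using sg by (simp add: sgraph_def)

lemma finG: "finite G"
proof (rule finite_subset)
  show "G \<subseteq> graph_aut V E" using GA by blast
  show "finite (graph_aut V E)" by (rule ga_finite[OF finV])
qed

lemma nb_fin: "finite (nbhd E x)"
proof (rule finite_subset)
  show "nbhd E x \<subseteq> V" using E_V by (auto simp: nbhd_def)
qed (rule finV)

lemma nb_card: "x \<in> V \<Longrightarrow> card (nbhd E x) = 3"
  using cub by (simp add: cubic_def)

lemma nb_G: "g \<in> G \<Longrightarrow> w \<in> nbhd E x \<Longrightarrow> g w \<in> nbhd E (g x)"
  by (simp add: nbhd_def G_adj)

lemma H_G: "h \<in> H \<Longrightarrow> h \<in> G" and H_u: "h \<in> H \<Longrightarrow> h u = u"
  by (auto simp: stabilizer_def)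

lemma arc_ext1:
  assumes a: "s_arc V E k xs"
  shows "\<exists>y. s_arc V E (Suc k) (xs @ [y])"
proof -
  have len: "length xs = Suc k" and sub: "set xs \<subseteq> V"
    and ad: "\<forall>i<k. E (xs ! i) (xs ! Suc i)"
    and nb: "\<forall>i. Suc (Suc i) \<le> k \<longrightarrow> xs ! i \<noteq> xs ! Suc (Suc i)"
    using a by (auto simp: s_arc_def)
  let ?x = "xs ! k"
  have xV: "?x \<in> V" using len sub by auto
  have c3: "card (nbhd E ?x) = 3" using nb_card xV by simp
  have "\<exists>y. E ?x y \<and> (0 < k \<longrightarrow> y \<noteq> xs ! (k - 1))"
  proof -
    have "card (nbhd E ?x - {xs ! (k - 1)}) \<ge> 2"
      using c3 by (simp add: card_Diff_singleton_if)
    then have "nbhd E ?x - {xs ! (k - 1)} \<noteq> {}" by (metis card.empty not_numeral_le_zero)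
    then obtain y where "y \<in> nbhd E ?x - {xs ! (k - 1)}" by blast
    then show ?thesis by (auto simp: nbhd_def)
  qed
  then obtain y where y1: "E ?x y" and y2: "0 < k \<longrightarrow> y \<noteq> xs ! (k - 1)" by blast
  have "s_arc V E (Suc k) (xs @ [y])"
    unfolding s_arc_def
  proof (intro conjI allI impI)
    show "length (xs @ [y]) = Suc (Suc k)" using len by simp
    show "set (xs @ [y]) \<subseteq> V" using sub y1 E_V by auto
  next
    fix i assume i: "i < Suc k"
    show "E ((xs @ [y]) ! i) ((xs @ [y]) ! Suc i)"
    proof (cases "i < k")
      case True then show ?thesis using ad len by (simp add: nth_append)
    next
      case False then have "i = k" using i by simp
      then show ?thesis using y1 len by (simp add: nth_append)
    qed
  next
    fix i assume i: "Suc (Suc i) \<le> Suc k"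
    show "(xs @ [y]) ! i \<noteq> (xs @ [y]) ! Suc (Suc i)"
    proof (cases "Suc (Suc i) \<le> k")
      case True then show ?thesis using nb len by (simp add: nth_append)
    next
      case False then have "Suc (Suc i) = Suc k" using i by simp
      then have "i = k - 1" "0 < k" by auto
      then show ?thesis using y2 len by (simp add: nth_append)
    qed
  qed
  then show ?thesis by blast
qed

lemma arc_ext:
  assumes "s_arc V E k xs" "k \<le> m"
  shows "\<exists>ys. s_arc V E m (xs @ ys)"
  using assms(2)
proof (induction m)
  case 0 then show ?case using assms(1) by (rule_tac x="[]" in exI) simp
next
  case (Suc m)
  show ?case
  proof (cases "k = Suc m")
    case True then show ?thesis using assms(1) by (rule_tac x="[]" in exI) simp
  next
    case False
    then obtain ys where "s_arc V E m (xs @ ys)" using Suc by auto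
    then obtain y where "s_arc V E (Suc m) ((xs @ ys) @ [y])" using arc_ext1 by blast
    then show ?thesis by (rule_tac x="ys @ [y]" in exI) simp
  qed
qed

lemma arc_trans:
  assumes "s_arc V E k xs" "s_arc V E k xs'" "k \<le> s"
  shows "\<exists>g\<in>G. map g xs = xs'"
proof -
  obtain ys where y: "s_arc V E s (xs @ ys)" using arc_ext assms by blast
  obtain ys' where y': "s_arc V E s (xs' @ ys')" using arc_ext assms by blast
  obtain g where g: "g \<in> G" "map g (xs @ ys) = xs' @ ys'"
    using sreg y y' unfolding s_regular_def by blast
  have "length (map g xs) = length xs'" using assms by (simp add: s_arc_def)
  then have "map g xs = xs'" using g(2) by simp
  then show ?thesis using g(1) by blast
qed

lemma s2: "2 \<le> s" using sin by auto

lemma vtrans: "x \<in> V \<Longrightarrow> \<exists>g\<in>G. g u = x"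
proof -
  assume x: "x \<in> V"
  have "s_arc V E 0 [u]" "s_arc V E 0 [x]" using x uV by (auto simp: s_arc_def)
  then obtain g where "g \<in> G" "map g [u] = [x]" using arc_trans[of 0 "[u]" "[x]"] by auto
  then show ?thesis by auto
qed

lemma arc_swap: "\<exists>g\<in>G. g u = v \<and> g v = u"
proof -
  have "s_arc V E 1 [u, v]" "s_arc V E 1 [v, u]" using euv E_sym uV vV by (auto simp: s_arc_def)
  then obtain g where "g \<in> G" "map g [u, v] = [v, u]" using arc_trans[of 1 "[u, v]" "[v, u]"] s2 by auto
  then show ?thesis by auto
qed

lemma two_arc:
  assumes "E w1 u" "E u w2" "w1 \<noteq> w2" "E w1' u" "E u w2'" "w1' \<noteq> w2'"
  shows "\<exists>g\<in>G. g w1 = w1' \<and> g u = u \<and> g w2 = w2'"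
proof -
  have "s_arc V E 2 [w1, u, w2]" "s_arc V E 2 [w1', u, w2']"
    using assms E_V by (auto simp: s_arc_def less_Suc_eq numeral_2_eq_2 le_Suc_eq)
  then obtain g where "g \<in> G" "map g [w1, u, w2] = [w1', u, w2']"
    using arc_trans[of 2 "[w1, u, w2]" "[w1', u, w2']"] s2 by auto
  then show ?thesis by auto
qed

end

lemma card_img_eq:
  assumes "\<forall>a\<in>A. \<forall>b\<in>A. F a = F b \<longleftrightarrow> f a = f b"
  shows "card (F ` A) = card (f ` A)"
proof -
  let ?P = "(\<lambda>a. (F a, f a)) ` A"
  have "inj_on fst ?P" using assms by (auto simp: inj_on_def)
  then have 1: "card (fst ` ?P) = card ?P" by (rule card_image)
  have "inj_on snd ?P" using assms by (auto simp: inj_on_def)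
  then have 2: "card (snd ` ?P) = card ?P" by (rule card_image)
  have "fst ` ?P = F ` A" "snd ` ?P = f ` A" by (auto simp: image_image)
  then show ?thesis using 1 2 by simp
qed

lemma (in group) rcos_eq_iff:
  assumes "subgroup K G" "a \<in> carrier G" "b \<in> carrier G"
  shows "K #> a = K #> b \<longleftrightarrow> a \<otimes> inv b \<in> K"
proof
  assume eq: "K #> a = K #> b"
  have "a \<in> K #> b" using rcos_self[OF assms(2,1)] eq by simp
  then obtain k where k: "k \<in> K" "a = k \<otimes> b" by (auto simp: r_coset_def)
  have "k \<in> carrier G" by (rule subgroup.mem_carrier[OF assms(1) k(1)])
  then have "a \<otimes> inv b = k" using k(2) assms(3) by (simp add: m_assoc r_inv)
  then show "a \<otimes> inv b \<in> K" using k(1) by simp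
next
  assume h: "a \<otimes> inv b \<in> K"
  have "(a \<otimes> inv b) \<otimes> b = a" using assms(2,3) by (simp add: m_assoc)
  moreover have "(a \<otimes> inv b) \<otimes> b \<in> K #> b" by (rule rcosI[OF h subgroup.subset[OF assms(1)] assms(3)])
  ultimately have "a \<in> K #> b" by simp
  then show "K #> a = K #> b" using repr_independence[OF _ assms(3,1)] by simp
qed

lemma (in group) rcosets_sub:
  "rcosets\<^bsub>G\<lparr>carrier := A\<rparr>\<^esub> K = (\<lambda>a. K #> a) ` A"
  by (auto simp: RCOSETS_def r_coset_def)

lemma (in group) index_card:
  assumes "subgroup A G" "subgroup K G" "K \<subseteq> A"
    and "\<forall>a\<in>A. \<forall>b\<in>A. a \<otimes> inv b \<in> K \<longleftrightarrow> f a = f b"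
  shows "card (rcosets\<^bsub>G\<lparr>carrier := A\<rparr>\<^esub> K) = card (f ` A)"
proof -
  have "\<forall>a\<in>A. \<forall>b\<in>A. K #> a = K #> b \<longleftrightarrow> f a = f b"
    using assms(4) rcos_eq_iff[OF assms(2)] subgroup.mem_carrier[OF assms(1)] by blast
  then show ?thesis unfolding rcosets_sub by (rule card_img_eq)
qed

lemma (in group) index2:
  assumes "subgroup A G" "subgroup K G" "K \<subseteq> A"
    and "card (rcosets\<^bsub>G\<lparr>carrier := A\<rparr>\<^esub> K) = 2"
  shows "\<exists>h\<in>A. h \<notin> K" and "\<And>h h'. h \<in> A \<Longrightarrow> h' \<in> A \<Longrightarrow> h \<notin> K \<Longrightarrow> h' \<notin> K \<Longrightarrow> h \<otimes> inv h' \<in> K"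
proof -
  let ?S = "(\<lambda>a. K #> a) ` A"
  have c: "card ?S = 2" using assms(4) rcosets_sub by simp
  have Ac: "\<And>a. a \<in> A \<Longrightarrow> a \<in> carrier G" by (rule subgroup.mem_carrier[OF assms(1)])
  have one: "\<one> \<in> A" by (rule subgroup.one_closed[OF assms(1)])
  have eqK: "\<And>a. a \<in> A \<Longrightarrow> K #> a = K \<longleftrightarrow> a \<in> K"
  proof -
    fix a assume a: "a \<in> A"
    have "K #> a = K #> \<one> \<longleftrightarrow> a \<otimes> inv \<one> \<in> K" using rcos_eq_iff[OF assms(2) Ac[OF a]] by simp
    moreover have "K #> \<one> = K" by (rule coset_mult_one[OF subgroup.subset[OF assms(2)]])
    ultimately show "K #> a = K \<longleftrightarrow> a \<in> K" using Ac[OF a] by simp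
  qed
  have KS: "K \<in> ?S" using eqK[OF one] one subgroup.one_closed[OF assms(2)] by force
  obtain Z0 where Z0: "Z0 \<in> ?S" "Z0 \<noteq> K" using c KS
    by (metis card_2_iff')
  then obtain h where h: "h \<in> A" "Z0 = K #> h" by blast
  show "\<exists>h\<in>A. h \<notin> K" using h Z0 eqK by blast
  fix h1 h2 assume h12: "h1 \<in> A" "h2 \<in> A" "h1 \<notin> K" "h2 \<notin> K"
  have all: "\<forall>Z\<in>?S. Z = K \<or> Z = Z0" using c KS Z0
    by (smt (verit) card_2_iff')
  have "K #> h1 = Z0" "K #> h2 = Z0" using all h12 eqK by blast+
  then have "K #> h1 = K #> h2" by simp
  then show "h1 \<otimes> inv h2 \<in> K" using rcos_eq_iff[OF assms(2) Ac Ac] h12 by blast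
qed

context cgraph
begin

lemma gi_eqI: "x \<in> G \<Longrightarrow> (\<And>z. y (x z) = z) \<Longrightarrow> gi x = y"
proof (rule ext)
  fix z assume x: "x \<in> G" and h: "\<And>z. y (x z) = z"
  have "gi x z = y (x (gi x z))" using h by simp
  also have "\<dots> = y z" using gi_app2[OF x] by simp
  finally show "gi x z = y z" .
qed

lemma H_sub: "subgroup H (pgrp G)"
proof (rule Gr.subgroupI)
  show "H \<subseteq> carrier (pgrp G)" by (auto simp: stabilizer_def)
  show "H \<noteq> {}" using one_G by (auto simp: stabilizer_def)
  fix a assume a: "a \<in> H"
  show "gi a \<in> H" using a gi_G gi_app1[of a u] by (auto simp: stabilizer_def)
  fix b assume b: "b \<in> H"
  show "a \<cdot> b \<in> H" using a b mul_G by (auto simp: stabilizer_def app_mul)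
qed

lemma conj_sub_sub:
  assumes b: "b \<in> G" and L: "subgroup L (pgrp G)"
  shows "subgroup (conj_sub G L b) (pgrp G)"
proof (rule Gr.subgroupI)
  have LG: "\<And>l. l \<in> L \<Longrightarrow> l \<in> G" using L subgroup.mem_carrier by force
  show "conj_sub G L b \<subseteq> carrier (pgrp G)"
    using LG b gi_G mul_G by (auto simp: conj_sub_def)
  have "\<one>\<^bsub>pgrp G\<^esub> \<in> L" by (rule subgroup.one_closed[OF L])
  then show "conj_sub G L b \<noteq> {}" by (auto simp: conj_sub_def)
  fix x assume "x \<in> conj_sub G L b"
  then obtain l where l: "l \<in> L" "x = gi b \<cdot> l \<cdot> b" by (auto simp: conj_sub_def)
  have il: "gi l \<in> L" using l(1) subgroup.m_inv_closed[OF L] by simp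
  have "gi x = gi b \<cdot> gi l \<cdot> b"
    using l LG[OF l(1)] b by (intro gi_eqI) (auto simp: app_mul gi_app1 gi_app2 mul_G gi_G)
  then show "gi x \<in> conj_sub G L b" using il by (auto simp: conj_sub_def)
  fix y assume "y \<in> conj_sub G L b"
  then obtain l' where l': "l' \<in> L" "y = gi b \<cdot> l' \<cdot> b" by (auto simp: conj_sub_def)
  have ll: "l \<cdot> l' \<in> L" using l l' subgroup.m_closed[OF L] by simp
  have "x \<cdot> y = gi b \<cdot> (l \<cdot> l') \<cdot> b"
    using l l' b by (intro ext) (simp add: app_mul gi_app1)
  then show "x \<cdot> y \<in> conj_sub G L b" using ll by (auto simp: conj_sub_def)
qed

lemma stab_sub:
  assumes L: "subgroup L (pgrp G)"
  shows "subgroup {m \<in> L. m w = w} (pgrp G)"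
proof (rule Gr.subgroupI)
  have LG: "\<And>l. l \<in> L \<Longrightarrow> l \<in> G" using L subgroup.mem_carrier by force
  show "{m \<in> L. m w = w} \<subseteq> carrier (pgrp G)" using LG by auto
  have "\<one>\<^bsub>pgrp G\<^esub> \<in> L" by (rule subgroup.one_closed[OF L])
  then show "{m \<in> L. m w = w} \<noteq> {}" using one_app by blast
  fix a assume a: "a \<in> {m \<in> L. m w = w}"
  show "gi a \<in> {m \<in> L. m w = w}"
    using a subgroup.m_inv_closed[OF L] gi_app1[OF LG, of a w] by auto
  fix b assume b: "b \<in> {m \<in> L. m w = w}"
  show "a \<cdot> b \<in> {m \<in> L. m w = w}"
    using a b subgroup.m_closed[OF L] by (auto simp: app_mul)
qed

lemma nb_orbit:
  assumes L: "subgroup L (pgrp G)" and LH: "L \<subseteq> H" and sq: "\<forall>h\<in>H. h \<cdot> h \<in> L"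
  shows "\<forall>w\<in>nbhd E u. \<exists>l\<in>L. l v = w"
proof -
  obtain w1 w2 w3 where N: "nbhd E u = {w1, w2, w3}" "w1 \<noteq> w2" "w2 \<noteq> w3" "w1 \<noteq> w3"
    using nb_card[OF uV] card_3_iff by metis
  have e: "E u w1" "E u w2" "E u w3" using N(1) by (auto simp: nbhd_def)
  obtain h where h: "h \<in> G" "h w1 = w2" "h u = u" "h w2 = w3"
    using two_arc[of w1 w2 w2 w3] e E_sym N by blast
  have hH: "h \<in> H" using h by (simp add: stabilizer_def)
  have "h w3 \<in> nbhd E u" using nb_G[OF h(1), of w3 u] e h(3) by (simp add: nbhd_def)
  moreover have "h w3 \<noteq> w2" using h(2) G_inj[OF h(1)] N by metis
  moreover have "h w3 \<noteq> w3" using h(4) G_inj[OF h(1)] N by metis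
  ultimately have h3: "h w3 = w1" using N(1) by blast
  let ?k = "h \<cdot> h"
  have kL: "?k \<in> L" using sq hH by blast
  have k: "?k w1 = w3" "?k w2 = w1" "?k w3 = w2" using h h3 by (simp_all add: app_mul)
  have kkL: "?k \<cdot> ?k \<in> L" using kL subgroup.m_closed[OF L] by blast
  have kk: "(?k \<cdot> ?k) w1 = w2" "(?k \<cdot> ?k) w2 = w3" "(?k \<cdot> ?k) w3 = w1"
    using k by (simp_all only: app_mul)
  have oL: "\<one>\<^bsub>pgrp G\<^esub> \<in> L" by (rule subgroup.one_closed[OF L])
  have "v \<in> nbhd E u" using euv by (simp add: nbhd_def)
  then have vN: "v \<in> {w1, w2, w3}" using N(1) by simp
  show ?thesis
  proof
    fix w assume "w \<in> nbhd E u"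
    then have wN: "w \<in> {w1, w2, w3}" using N(1) by simp
    show "\<exists>l\<in>L. l v = w"
      using vN wN oL kL kkL k kk one_app[of w1] one_app[of w2] one_app[of w3] by auto
  qed
qed

lemma orbit_card:
  assumes L: "subgroup L (pgrp G)" and LH: "L \<subseteq> H" and sq: "\<forall>h\<in>H. h \<cdot> h \<in> L"
  shows "(\<lambda>l. l v) ` L = nbhd E u" and "card ((\<lambda>l. l v) ` L) = 3"
proof -
  have "(\<lambda>l. l v) ` L \<subseteq> nbhd E u"
  proof
    fix x assume "x \<in> (\<lambda>l. l v) ` L"
    then obtain l where l: "l \<in> L" "x = l v" by blast
    have "l \<in> H" using l LH by blast
    then have "E (l u) (l v)" using G_adj[OF H_G] euv by blast
    moreover have "l u = u" using H_u \<open>l \<in> H\<close> by blast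
    ultimately show "x \<in> nbhd E u" using l by (simp add: nbhd_def)
  qed
  moreover have "nbhd E u \<subseteq> (\<lambda>l. l v) ` L" using nb_orbit[OF assms] by force
  ultimately show e: "(\<lambda>l. l v) ` L = nbhd E u" by blast
  show "card ((\<lambda>l. l v) ` L) = 3" using e nb_card uV by simp
qed

end

locale condA = cgraph +
  fixes b and L
  assumes cc: "cover_condition G u v b L"
begin

lemma bG: "b \<in> G" and bu: "b u = v" and bv: "b v = u" and Lsub: "subgroup L (pgrp G)"
  and LH: "L \<subseteq> H" and idx2: "card (rcosets\<^bsub>(pgrp G)\<lparr>carrier := H\<rparr>\<^esub> L) = 2"
  and bbL: "b \<cdot> b \<in> L" and gen: "generate (pgrp G) (insert b L) = G"
  and idx3: "card (rcosets\<^bsub>(pgrp G)\<lparr>carrier := L\<rparr>\<^esub> (conj_sub G L b \<inter> L)) = 3"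
  using cc by (auto simp: cover_condition_def sub_index_def)

lemma LG: "l \<in> L \<Longrightarrow> l \<in> G"
  using Lsub subgroup.mem_carrier by force

lemma L_u: "l \<in> L \<Longrightarrow> l u = u"
  using LH H_u by blast

lemma L_mul: "l \<in> L \<Longrightarrow> l' \<in> L \<Longrightarrow> l \<cdot> l' \<in> L"
  using subgroup.m_closed[OF Lsub] by simp

lemma L_inv: "l \<in> L \<Longrightarrow> gi l \<in> L"
  using subgroup.m_inv_closed[OF Lsub] by simp

lemma L_one: "\<one>\<^bsub>pgrp G\<^esub> \<in> L"
  using subgroup.one_closed[OF Lsub] by simp

lemma L_id: "id \<in> L"
  using L_one one_eq by simp

lemma pairL: "h \<in> H \<Longrightarrow> h' \<in> H \<Longrightarrow> h \<notin> L \<Longrightarrow> h' \<notin> L \<Longrightarrow> h \<cdot> gi h' \<in> L"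
  using Gr.index2(2)[OF H_sub Lsub LH idx2] by blast

lemma exH: "\<exists>h\<in>H. h \<notin> L"
  using Gr.index2(1)[OF H_sub Lsub LH idx2] by blast

lemma H_mul: "h \<in> H \<Longrightarrow> h' \<in> H \<Longrightarrow> h \<cdot> h' \<in> H"
  using subgroup.m_closed[OF H_sub] by simp

lemma H_inv: "h \<in> H \<Longrightarrow> gi h \<in> H"
  using subgroup.m_inv_closed[OF H_sub] by simp

lemma sq: "\<forall>h\<in>H. h \<cdot> h \<in> L"
proof
  fix h assume h: "h \<in> H"
  show "h \<cdot> h \<in> L"
  proof (rule ccontr)
    assume n: "h \<cdot> h \<notin> L"
    have hL: "h \<notin> L" using n L_mul by blast
    have "(h \<cdot> h) \<cdot> gi h \<in> L" using pairL[OF H_mul[OF h h] h n hL] .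
    moreover have "(h \<cdot> h) \<cdot> gi h = h" using H_G[OF h] by (intro ext) (simp add: app_mul gi_app1)
    ultimately show False using hL by simp
  qed
qed

lemma Ltrans: "\<forall>w\<in>nbhd E u. \<exists>l\<in>L. l v = w"
  using nb_orbit[OF Lsub LH sq] .

lemma giv: "gi b v = u" using gi_app1[OF bG, of u] bu by simp
lemma giu: "gi b u = v" using gi_app1[OF bG, of v] bv by simp

lemma F3: assumes m: "m \<in> L" "m v = v" shows "b \<cdot> m \<cdot> gi b \<in> L"
proof -
  let ?K1 = "conj_sub G L b \<inter> L" and ?K2 = "{m \<in> L. m v = v}"
  let ?GL = "(pgrp G)\<lparr>carrier := L\<rparr>"
  have K1s: "subgroup ?K1 (pgrp G)"
    by (rule Gr.subgroups_Inter_pair[OF conj_sub_sub[OF bG Lsub] Lsub])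
  have K2s: "subgroup ?K2 (pgrp G)" by (rule stab_sub[OF Lsub])
  have K12: "?K1 \<subseteq> ?K2"
  proof
    fix x assume "x \<in> ?K1"
    then obtain l where l: "l \<in> L" "x = gi b \<cdot> l \<cdot> b" "x \<in> L" by (auto simp: conj_sub_def)
    have "x v = v" using l giv L_u[OF l(1)] bu by (simp add: app_mul)
    then show "x \<in> ?K2" using l by simp
  qed
  have gGL: "group ?GL" by (rule Gr.subgroup_imp_group[OF Lsub])
  have "card (rcosets\<^bsub>?GL\<^esub> ?K1) * card ?K1 = order ?GL"
    by (rule group.lagrange[OF gGL Gr.subgroup_incl[OF K1s Lsub]]) auto
  then have c1: "3 * card ?K1 = card L" using idx3 by (simp add: order_def)
  have "card (rcosets\<^bsub>?GL\<^esub> ?K2) * card ?K2 = order ?GL"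
    by (rule group.lagrange[OF gGL Gr.subgroup_incl[OF K2s Lsub]]) auto
  moreover have "card (rcosets\<^bsub>?GL\<^esub> ?K2) = card ((\<lambda>l. l v) ` L)"
  proof (rule Gr.index_card[OF Lsub K2s])
    show "?K2 \<subseteq> L" by blast
    show "\<forall>a\<in>L. \<forall>b\<in>L. a \<cdot> gi b \<in> ?K2 \<longleftrightarrow> a v = b v"
    proof (intro ballI)
      fix a c assume a: "a \<in> L" and c: "c \<in> L"
      have "a \<cdot> gi c \<in> L" using a c L_mul L_inv by blast
      moreover have "(a \<cdot> gi c) v = v \<longleftrightarrow> a v = c v"
        using gi_app1[OF LG[OF c]] gi_app2[OF LG[OF c]] by (metis app_mul)
      ultimately show "a \<cdot> gi c \<in> ?K2 \<longleftrightarrow> a v = c v" by simp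
    qed
  qed
  ultimately have c2: "3 * card ?K2 = card L" using orbit_card(2)[OF Lsub LH sq] by (simp add: order_def)
  have "finite ?K2" using finG LG by (metis (no_types, lifting) finite_subset mem_Collect_eq subsetI)
  then have "?K1 = ?K2" using K12 c1 c2 by (simp add: card_subset_eq)
  then have "m \<in> conj_sub G L b" using m by blast
  then obtain l where l: "l \<in> L" "m = gi b \<cdot> l \<cdot> b" by (auto simp: conj_sub_def)
  have "b \<cdot> m \<cdot> gi b = l"
    using l bG LG[OF l(1)] by (intro ext) (simp add: app_mul gi_app1 gi_app2)
  then show ?thesis using l by simp
qed

end

context condA
begin

lemmas gs = app_mul gi_app1 gi_app2

definition h0 where "h0 = (SOME h. h \<in> H \<and> h \<notin> L \<and> h v = v)"

lemma h0_ex: "\<exists>h. h \<in> H \<and> h \<notin> L \<and> h v = v"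
proof -
  obtain h1 where h1: "h1 \<in> H" "h1 \<notin> L" using exH by blast
  have "h1 v \<in> nbhd E u" using G_adj[OF H_G[OF h1(1)] euv] H_u[OF h1(1)] by (simp add: nbhd_def)
  then obtain l where l: "l \<in> L" "l v = h1 v" using Ltrans by blast
  let ?h = "h1 \<cdot> gi l"
  have "?h \<in> H" using H_mul[OF h1(1) H_inv] l LH by blast
  moreover have "?h \<notin> L"
  proof
    assume "?h \<in> L"
    then have "?h \<cdot> l \<in> L" using l L_mul by blast
    moreover have "?h \<cdot> l = h1" using H_G[OF h1(1)] LG[OF l(1)] by (intro ext) (simp add: gs)
    ultimately show False using h1 by simp
  qed
  moreover have "?h v = v" using l(2)[symmetric] LG[OF l(1)] by (simp add: gs)
  ultimately show ?thesis by blast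
qed

lemma h0: "h0 \<in> H" "h0 \<notin> L" "h0 v = v" "h0 \<in> G" "h0 u = u"
  using someI_ex[OF h0_ex] H_G H_u unfolding h0_def by blast+

lemma h0_conj1: "l \<in> L \<Longrightarrow> h0 \<cdot> l \<cdot> gi h0 \<in> L"
proof -
  assume l: "l \<in> L"
  have "h0 \<cdot> l \<in> H" using H_mul[OF h0(1)] l LH by blast
  moreover have "h0 \<cdot> l \<notin> L"
  proof
    assume "h0 \<cdot> l \<in> L"
    then have "h0 \<cdot> l \<cdot> gi l \<in> L" using L_mul L_inv l by blast
    moreover have "h0 \<cdot> l \<cdot> gi l = h0" using h0(4) LG[OF l] by (intro ext) (simp add: gs)
    ultimately show False using h0(2) by simp
  qed
  ultimately show ?thesis using pairL h0(1,2) by blast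
qed

lemma h0_conj2: "l \<in> L \<Longrightarrow> gi h0 \<cdot> l \<cdot> h0 \<in> L"
proof -
  assume l: "l \<in> L"
  have ih: "gi h0 \<in> H" "gi h0 \<notin> L" using H_inv h0 L_inv Gr.inv_inv by (metis pgrp_carrier)+
  have "gi h0 \<cdot> l \<in> H" using H_mul[OF ih(1)] l LH by blast
  moreover have "gi h0 \<cdot> l \<notin> L"
  proof
    assume "gi h0 \<cdot> l \<in> L"
    then have "gi h0 \<cdot> l \<cdot> gi l \<in> L" using L_mul L_inv l by blast
    moreover have "gi h0 \<cdot> l \<cdot> gi l = gi h0" using h0(4) LG[OF l] gi_G by (intro ext) (simp add: gs)
    ultimately show False using ih by simp
  qed
  ultimately have "gi h0 \<cdot> l \<cdot> gi (gi h0) \<in> L" using pairL ih by blast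
  then show ?thesis using h0(4) by simp
qed

definition l0 where "l0 = b \<cdot> h0 \<cdot> gi b \<cdot> gi h0"

lemma l0: "l0 \<in> L"
proof -
  let ?k = "b \<cdot> h0 \<cdot> gi b"
  have kG: "?k \<in> G" using bG h0 gi_G mul_G by simp
  have ku: "?k u = u" using bu h0 giv by (simp add: gs)
  have kv: "?k v = v" using bv h0 giu by (simp add: gs)
  have kH: "?k \<in> H" using kG ku by (simp add: stabilizer_def)
  have kL: "?k \<notin> L"
  proof
    assume "?k \<in> L"
    then have "b \<cdot> ?k \<cdot> gi b \<in> L" using F3 kv by blast
    then have "gi (b \<cdot> b) \<cdot> (b \<cdot> ?k \<cdot> gi b) \<cdot> (b \<cdot> b) \<in> L"
      using bbL L_mul L_inv by blast
    moreover have "gi (b \<cdot> b) \<cdot> (b \<cdot> ?k \<cdot> gi b) \<cdot> (b \<cdot> b) = h0"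
      using bG h0(4) by (intro ext) (simp add: gs Gr.inv_mult_group mul_G gi_G)
    ultimately show False using h0(2) by simp
  qed
  show ?thesis using pairL[OF kH h0(1) kL h0(2)] unfolding l0_def .
qed

lemma l0G: "l0 \<in> G" using l0 LG by blast

lemma gi_l0: "gi l0 = h0 \<cdot> b \<cdot> gi h0 \<cdot> gi b"
  using l0G bG h0(4) unfolding l0_def by (intro gi_eqI) (simp_all add: gs mul_G gi_G)

definition D where "D = {l \<cdot> b \<cdot> l' | l l'. l \<in> L \<and> l' \<in> L}"

lemma DG: "d \<in> D \<Longrightarrow> d \<in> G"
  using LG bG mul_G by (auto simp: D_def)

lemma bD: "b \<in> D"
proof -
  have "id \<cdot> b \<cdot> id = b" by (intro ext) (simp add: gs)
  then show ?thesis using L_id unfolding D_def by force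
qed

lemma D_Lmul: "l \<in> L \<Longrightarrow> d \<in> D \<Longrightarrow> l \<cdot> d \<in> D"
proof -
  assume l: "l \<in> L" and "d \<in> D"
  then obtain l1 l2 where d: "l1 \<in> L" "l2 \<in> L" "d = l1 \<cdot> b \<cdot> l2" by (auto simp: D_def)
  have "l \<cdot> d = (l \<cdot> l1) \<cdot> b \<cdot> l2" unfolding d(3) by (intro ext) (simp add: gs)
  then show ?thesis using L_mul[OF l d(1)] d(2) unfolding D_def by blast
qed

lemma D_mulL: "l \<in> L \<Longrightarrow> d \<in> D \<Longrightarrow> d \<cdot> l \<in> D"
proof -
  assume l: "l \<in> L" and "d \<in> D"
  then obtain l1 l2 where d: "l1 \<in> L" "l2 \<in> L" "d = l1 \<cdot> b \<cdot> l2" by (auto simp: D_def)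
  have "d \<cdot> l = l1 \<cdot> b \<cdot> (l2 \<cdot> l)" unfolding d(3) by (intro ext) (simp add: gs)
  then show ?thesis using L_mul[OF d(2) l] d(1) unfolding D_def by blast
qed

lemma gib_D: "gi b \<in> D"
proof -
  have "gi (b \<cdot> b) \<cdot> b \<cdot> id = gi b"
    using bG by (intro ext) (simp add: gs Gr.inv_mult_group gi_G)
  then show ?thesis using L_inv[OF bbL] L_id unfolding D_def by force
qed

lemma D_inv: "d \<in> D \<Longrightarrow> gi d \<in> D"
proof -
  assume "d \<in> D"
  then obtain l1 l2 where d: "l1 \<in> L" "l2 \<in> L" "d = l1 \<cdot> b \<cdot> l2" by (auto simp: D_def)
  have "gi d = gi l2 \<cdot> (gi b \<cdot> gi l1)"
    unfolding d(3) using LG[OF d(1)] LG[OF d(2)] bG by (simp add: Gr.inv_mult_group mul_G gi_G Gr.m_assoc)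
  then show ?thesis using D_Lmul[OF L_inv[OF d(2)] D_mulL[OF L_inv[OF d(1)] gib_D]] by simp
qed

lemma D_not_id: "id \<notin> D"
proof
  assume "id \<in> D"
  then obtain l1 l2 where d: "l1 \<in> L" "l2 \<in> L" "id = l1 \<cdot> b \<cdot> l2" by (auto simp: D_def)
  have "(l1 \<cdot> b \<cdot> l2) u = u" using d(3) by (metis id_apply)
  then have "l2 v = l2 u" using L_u[OF d(1)] L_u[OF d(2)] bu by (simp add: gs)
  then show False using G_inj[OF LG[OF d(2)]] uv by blast
qed

lemma D_conj_L: "x \<in> G \<Longrightarrow> m \<in> L \<Longrightarrow> m' \<in> L \<Longrightarrow> m' \<cdot> x \<cdot> gi m \<in> D \<longleftrightarrow> x \<in> D"
proof
  assume x: "x \<in> G" and m: "m \<in> L" "m' \<in> L"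
  show "x \<in> D \<Longrightarrow> m' \<cdot> x \<cdot> gi m \<in> D" using D_Lmul D_mulL L_inv m by blast
  assume "m' \<cdot> x \<cdot> gi m \<in> D"
  then have "gi m' \<cdot> (m' \<cdot> x \<cdot> gi m) \<cdot> m \<in> D" using D_Lmul D_mulL L_inv m by blast
  moreover have "gi m' \<cdot> (m' \<cdot> x \<cdot> gi m) \<cdot> m = x"
    using x LG[OF m(1)] LG[OF m(2)] by (intro ext) (simp add: gs)
  ultimately show "x \<in> D" by simp
qed

lemma D_h0: "d \<in> D \<Longrightarrow> h0 \<cdot> d \<cdot> gi h0 \<in> D"
proof -
  assume "d \<in> D"
  then obtain l1 l2 where d: "l1 \<in> L" "l2 \<in> L" "d = l1 \<cdot> b \<cdot> l2" by (auto simp: D_def)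
  have "h0 \<cdot> d \<cdot> gi h0 = ((h0 \<cdot> l1 \<cdot> gi h0) \<cdot> gi l0) \<cdot> b \<cdot> (h0 \<cdot> l2 \<cdot> gi h0)"
    unfolding d(3) gi_l0 using h0(4) bG LG[OF d(1)] LG[OF d(2)]
    by (intro ext) (simp add: gs)
  moreover have "(h0 \<cdot> l1 \<cdot> gi h0) \<cdot> gi l0 \<in> L" using h0_conj1[OF d(1)] L_inv[OF l0] L_mul by blast
  ultimately show ?thesis using h0_conj1[OF d(2)] unfolding D_def by blast
qed

lemma D_h0': "d \<in> D \<Longrightarrow> gi h0 \<cdot> d \<cdot> h0 \<in> D"
proof -
  assume "d \<in> D"
  then obtain l1 l2 where d: "l1 \<in> L" "l2 \<in> L" "d = l1 \<cdot> b \<cdot> l2" by (auto simp: D_def)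
  have "gi h0 \<cdot> d \<cdot> h0 = ((gi h0 \<cdot> l1 \<cdot> h0) \<cdot> (gi h0 \<cdot> l0 \<cdot> h0)) \<cdot> b \<cdot> (gi h0 \<cdot> l2 \<cdot> h0)"
    unfolding d(3) l0_def using h0(4) bG LG[OF d(1)] LG[OF d(2)]
    by (intro ext) (simp add: gs)
  moreover have "(gi h0 \<cdot> l1 \<cdot> h0) \<cdot> (gi h0 \<cdot> l0 \<cdot> h0) \<in> L" using h0_conj2[OF d(1)] h0_conj2[OF l0] L_mul by blast
  ultimately show ?thesis using h0_conj2[OF d(2)] unfolding D_def by blast
qed

end

lemma pgrp_inv_eq:
  assumes "y \<in> S" "y \<circ> x = id" "x \<circ> y = id"
  shows "inv\<^bsub>pgrp S\<^esub> x = y"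
  unfolding m_inv_def
proof (rule the_equality)
  show "y \<in> carrier (pgrp S) \<and> x \<otimes>\<^bsub>pgrp S\<^esub> y = \<one>\<^bsub>pgrp S\<^esub> \<and> y \<otimes>\<^bsub>pgrp S\<^esub> x = \<one>\<^bsub>pgrp S\<^esub>"
    using assms by (simp add: pgrp_mult pgrp_one)
  fix z assume "z \<in> carrier (pgrp S) \<and> x \<otimes>\<^bsub>pgrp S\<^esub> z = \<one>\<^bsub>pgrp S\<^esub> \<and> z \<otimes>\<^bsub>pgrp S\<^esub> x = \<one>\<^bsub>pgrp S\<^esub>"
  then have z: "z \<circ> x = id" by (simp add: pgrp_mult pgrp_one)
  have "z = z \<circ> (x \<circ> y)" using assms(3) by simp
  also have "\<dots> = (z \<circ> x) \<circ> y" by (simp add: comp_assoc)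
  finally show "z = y" using z by simp
qed

lemma rtranclp_sym:
  assumes "\<And>x y. R x y \<Longrightarrow> R y x" "R\<^sup>*\<^sup>* x y"
  shows "R\<^sup>*\<^sup>* y x"
  using assms(2)
proof (induction rule: rtranclp_induct)
  case base then show ?case by simp
next
  case (step y z)
  then show ?case using assms(1) by (meson converse_rtranclp_into_rtranclp)
qed

lemma rtranclp_map:
  assumes "\<And>x y. R x y \<Longrightarrow> R (f x) (f y)" "R\<^sup>*\<^sup>* x y"
  shows "R\<^sup>*\<^sup>* (f x) (f y)"
  using assms(2)
proof (induction rule: rtranclp_induct)
  case base then show ?case by simp
next
  case (step y z)
  then show ?case using assms(1) by (meson rtranclp.rtrancl_into_rtrancl)
qed

lemma ct_agree:
  assumes sgt: "sgraph Vt Et" and cp: "covering_proj Vt Et V E p"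
    and g1: "\<gamma>1 \<in> graph_aut Vt Et" and g2: "\<gamma>2 \<in> graph_aut Vt Et"
    and pp: "\<forall>x\<in>Vt. p (\<gamma>1 x) = p (\<gamma>2 x)"
    and x0: "\<gamma>1 x0 = \<gamma>2 x0" and path: "Et\<^sup>*\<^sup>* x0 Y"
  shows "\<gamma>1 Y = \<gamma>2 Y"
  using path
proof (induction rule: rtranclp_induct)
  case base then show ?case using x0 .
next
  case (step Y Z)
  have YZ: "Y \<in> Vt" "Z \<in> Vt" using step(2) sgt by (auto simp: sgraph_def)
  have "Et (\<gamma>1 Y) (\<gamma>1 Z)" using ga_adj[OF g1 YZ] step(2) by simp
  moreover have "Et (\<gamma>2 Y) (\<gamma>2 Z)" using ga_adj[OF g2 YZ] step(2) by simp
  then have "Et (\<gamma>1 Y) (\<gamma>2 Z)" using step(3) by simp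
  moreover have "\<gamma>1 Y \<in> Vt" using ga_in[OF g1 YZ(1)] .
  then have "inj_on p (nbhd Et (\<gamma>1 Y))" using cp by (simp add: covering_proj_def bij_betw_def)
  moreover have "p (\<gamma>1 Z) = p (\<gamma>2 Z)" using pp YZ by blast
  ultimately show ?case by (simp add: nbhd_def inj_on_def)
qed

lemma z2_iso:
  assumes "c \<noteq> id" "c \<circ> c = id"
  shows "pgrp {id, c} \<cong> integer_mod_group 2"
proof -
  let ?f = "\<lambda>x. if x = id then (0::int) else 1"
  have "?f \<in> iso (pgrp {id, c}) (integer_mod_group 2)"
    unfolding iso_def hom_def
  proof (intro CollectI conjI)
    show "?f \<in> carrier (pgrp {id, c}) \<rightarrow> carrier (integer_mod_group 2)"
      by (auto simp: carrier_integer_mod_group)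
    show "\<forall>x\<in>carrier (pgrp {id, c}). \<forall>y\<in>carrier (pgrp {id, c}).
        ?f (x \<otimes>\<^bsub>pgrp {id, c}\<^esub> y) = ?f x \<otimes>\<^bsub>integer_mod_group 2\<^esub> ?f y"
      using assms by (auto simp: pgrp_mult)
    show "bij_betw ?f (carrier (pgrp {id, c})) (carrier (integer_mod_group 2))"
      using assms by (auto simp: carrier_integer_mod_group bij_betw_def inj_on_def)
  qed
  then show ?thesis by (rule is_isoI)
qed

context condA
begin

definition t where "t x = (SOME g. g \<in> G \<and> g u = x)"

lemma t_ex: "x \<in> V \<Longrightarrow> \<exists>g. g \<in> G \<and> g u = x"
  using vtrans by blast

lemma t: "x \<in> V \<Longrightarrow> t x \<in> G" "x \<in> V \<Longrightarrow> t x u = x"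
  using someI_ex[OF t_ex] unfolding t_def by blast+

definition psi where "psi a = (a u, a \<cdot> gi (t (a u)) \<in> L)"
definition rho where "rho Q = (if snd Q then t (fst Q) else h0 \<cdot> t (fst Q))"

lemma gi_mul: "a \<in> G \<Longrightarrow> c \<in> G \<Longrightarrow> gi (a \<cdot> c) = gi c \<cdot> gi a"
  using Gr.inv_mult_group by simp

lemma gi_gi: "a \<in> G \<Longrightarrow> gi (gi a) = a"
  using Gr.inv_inv by simp

lemma psi_eq:
  assumes a: "a \<in> G" and a': "a' \<in> G"
  shows "psi a = psi a' \<longleftrightarrow> a \<cdot> gi a' \<in> L"
proof
  assume m: "a \<cdot> gi a' \<in> L"
  have "(a \<cdot> gi a') u = u" using L_u[OF m] .
  then have "gi a' (a u) = u" by (simp add: gs)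
  then have "a' (gi a' (a u)) = a' u" by simp
  then have eu: "a u = a' u" using gi_app2[OF a'] by simp
  have xV: "a u \<in> V" using G_in[OF a uV] .
  let ?T = "t (a u)"
  have T: "?T \<in> G" using t xV by blast
  have e1: "a \<cdot> gi ?T = (a \<cdot> gi a') \<cdot> (a' \<cdot> gi ?T)" using a a' T by (intro ext) (simp add: gs)
  have e2: "a' \<cdot> gi ?T = gi (a \<cdot> gi a') \<cdot> (a \<cdot> gi ?T)"
    using a a' T by (intro ext) (simp add: gs gi_mul gi_gi gi_G)
  have "a \<cdot> gi ?T \<in> L \<longleftrightarrow> a' \<cdot> gi ?T \<in> L"
    using e1 e2 m L_mul L_inv by metis
  then show "psi a = psi a'" unfolding psi_def using eu by simp
next
  assume eq: "psi a = psi a'"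
  then have eu: "a u = a' u" and eb: "a \<cdot> gi (t (a u)) \<in> L \<longleftrightarrow> a' \<cdot> gi (t (a u)) \<in> L"
    unfolding psi_def by auto
  have xV: "a u \<in> V" using G_in[OF a uV] .
  let ?T = "t (a u)"
  have T: "?T \<in> G" "?T u = a u" using t xV by blast+
  let ?c = "a \<cdot> gi ?T" and ?c' = "a' \<cdot> gi ?T"
  have cH: "?c \<in> H" "?c' \<in> H" using T a a' eu gi_app1[OF T(1), of u]
    by (auto simp: stabilizer_def gs mul_G gi_G)
  have e: "?c \<cdot> gi ?c' = a \<cdot> gi a'" using a a' T by (intro ext) (simp add: gs gi_mul gi_gi gi_G)
  show "a \<cdot> gi a' \<in> L"
  proof (cases "?c \<in> L")
    case True
    then have "?c' \<in> L" using eb by simp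
    then show ?thesis using True e L_mul L_inv by metis
  next
    case False
    then have "?c' \<notin> L" using eb by simp
    then show ?thesis using pairL[OF cH False] e by simp
  qed
qed

lemma rho_G: "x \<in> V \<Longrightarrow> rho (x, i) \<in> G"
  using t h0(4) mul_G by (simp add: rho_def)

lemma psi_rho: "x \<in> V \<Longrightarrow> psi (rho (x, i)) = (x, i)"
proof (cases i)
  case True
  assume x: "x \<in> V"
  have "t x \<cdot> gi (t x) \<in> L" using t(1)[OF x] L_one by simp
  then show ?thesis using True t[OF x] by (simp add: rho_def psi_def)
next
  case False
  assume x: "x \<in> V"
  have 1: "(h0 \<cdot> t x) u = x" using h0(5) t[OF x] by (simp add: gs)
  have "(h0 \<cdot> t x) \<cdot> gi (t x) = h0" using h0(4) t[OF x] by (intro ext) (simp add: gs)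
  then show ?thesis using False 1 h0(2) by (simp add: rho_def psi_def)
qed

lemma psiV: "a \<in> G \<Longrightarrow> psi a \<in> V \<times> UNIV"
  using G_in uV by (simp add: psi_def)

lemma psi_surj: "Q \<in> V \<times> UNIV \<Longrightarrow> psi (rho Q) = Q"
  using psi_rho by (cases Q) auto

lemma rhoG': "Q \<in> V \<times> UNIV \<Longrightarrow> rho Q \<in> G"
  using rho_G by (cases Q) auto

lemma rho_psi: "a \<in> G \<Longrightarrow> rho (psi a) \<cdot> gi a \<in> L"
proof -
  assume a: "a \<in> G"
  have "psi (rho (psi a)) = psi a" using psi_surj psiV a by blast
  then show ?thesis using psi_eq rhoG' psiV a by blast
qed

definition Vt where "Vt = V \<times> (UNIV :: bool set)"
definition Et where "Et Q R \<longleftrightarrow> Q \<in> Vt \<and> R \<in> Vt \<and> rho R \<cdot> gi (rho Q) \<in> D"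

lemma Et_psi:
  assumes a: "a \<in> G" and a': "a' \<in> G"
  shows "Et (psi a) (psi a') \<longleftrightarrow> a' \<cdot> gi a \<in> D"
proof -
  let ?m = "rho (psi a) \<cdot> gi a" and ?m' = "rho (psi a') \<cdot> gi a'"
  have m: "?m \<in> L" "?m' \<in> L" using rho_psi a a' by blast+
  have r: "rho (psi a) \<in> G" "rho (psi a') \<in> G" using rhoG' psiV a a' by blast+
  have "rho (psi a') \<cdot> gi (rho (psi a)) = ?m' \<cdot> (a' \<cdot> gi a) \<cdot> gi ?m"
    using a a' r by (intro ext) (simp add: gs gi_mul gi_gi gi_G)
  then have "rho (psi a') \<cdot> gi (rho (psi a)) \<in> D \<longleftrightarrow> a' \<cdot> gi a \<in> D"
    using D_conj_L[OF _ m(1) m(2)] a a' mul_G gi_G by simp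
  then show ?thesis using psiV a a' by (simp add: Et_def Vt_def)
qed

definition lift where "lift g Q = (if Q \<in> Vt then psi (rho Q \<cdot> g) else Q)"

lemma lift_psi: "a \<in> G \<Longrightarrow> g \<in> G \<Longrightarrow> lift g (psi a) = psi (a \<cdot> g)"
proof -
  assume a: "a \<in> G" and g: "g \<in> G"
  have r: "rho (psi a) \<in> G" using rhoG' psiV a by blast
  have "(rho (psi a) \<cdot> g) \<cdot> gi (a \<cdot> g) = rho (psi a) \<cdot> gi a"
    using a g r by (intro ext) (simp add: gs gi_mul gi_G)
  then have "psi (rho (psi a) \<cdot> g) = psi (a \<cdot> g)"
    using psi_eq rho_psi[OF a] r a g mul_G by simp
  then show ?thesis using psiV[OF a] by (simp add: lift_def Vt_def)
qed

lemma Vt_psi: "Q \<in> Vt \<Longrightarrow> \<exists>a\<in>G. Q = psi a"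
  using psi_surj rhoG' unfolding Vt_def by metis

end

context condA
begin

lemma Et_Vt: "Et Q R \<Longrightarrow> Q \<in> Vt \<and> R \<in> Vt"
  by (simp add: Et_def)

lemma psi_Vt: "a \<in> G \<Longrightarrow> psi a \<in> Vt"
  using psiV by (simp add: Vt_def)

lemma fst_psi: "fst (psi a) = a u"
  by (simp add: psi_def)

lemma sgraph_t: "sgraph Vt Et"
  unfolding sgraph_def
proof (intro conjI allI impI)
  show "finite Vt" using finV by (simp add: Vt_def)
  fix x y
  show "Et x y \<Longrightarrow> x \<in> Vt" "Et x y \<Longrightarrow> y \<in> Vt" by (simp_all add: Et_def)
  assume e: "Et x y"
  then obtain a a' where a: "a \<in> G" "x = psi a" "a' \<in> G" "y = psi a'" using Et_Vt Vt_psi by metis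
  have "a' \<cdot> gi a \<in> D" using e a Et_psi by simp
  then have "gi (a' \<cdot> gi a) \<in> D" by (rule D_inv)
  moreover have "gi (a' \<cdot> gi a) = a \<cdot> gi a'" using a by (simp add: gi_mul gi_gi gi_G)
  ultimately show "Et y x" using a Et_psi by simp
next
  fix x show "\<not> Et x x"
  proof
    assume "Et x x"
    then obtain a where a: "a \<in> G" "x = psi a" using Et_Vt Vt_psi by metis
    have "a \<cdot> gi a = id" using a(1) one_eq by simp
    then show False using \<open>Et x x\<close> a Et_psi D_not_id by simp
  qed
qed

lemma Et_D: "a \<in> G \<Longrightarrow> d \<in> D \<Longrightarrow> Et (psi a) (psi (d \<cdot> a))"
proof -
  assume a: "a \<in> G" and d: "d \<in> D"
  have "(d \<cdot> a) \<cdot> gi a = d" using a DG[OF d] by (intro ext) (simp add: gs)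
  then show ?thesis using Et_psi a DG[OF d] mul_G d by simp
qed

lemma Et_fst: "Et Q R \<Longrightarrow> E (fst Q) (fst R)"
proof -
  assume e: "Et Q R"
  then obtain a a' where a: "a \<in> G" "Q = psi a" "a' \<in> G" "R = psi a'" using Et_Vt Vt_psi by metis
  have "a' \<cdot> gi a \<in> D" using e a Et_psi by simp
  then obtain l1 l2 where l: "l1 \<in> L" "l2 \<in> L" "a' \<cdot> gi a = l1 \<cdot> b \<cdot> l2" by (auto simp: D_def)
  have "a' = (a' \<cdot> gi a) \<cdot> a" using a by (intro ext) (simp add: gs)
  then have "a' u = a (l2 v)" using l L_u[OF l(1)] bu by (simp add: gs)
  moreover have "a u = a (l2 u)" using L_u[OF l(2)] by simp
  moreover have "E (a (l2 u)) (a (l2 v))" using G_adj[OF a(1) G_adj[OF LG[OF l(2)] euv]] .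
  ultimately show ?thesis using a by (simp add: fst_psi)
qed

lemma nb_bij: "Q \<in> Vt \<Longrightarrow> bij_betw fst (nbhd Et Q) (nbhd E (fst Q))"
proof -
  assume "Q \<in> Vt"
  then obtain a where a: "a \<in> G" "Q = psi a" using Vt_psi by blast
  show ?thesis unfolding bij_betw_def
  proof (intro conjI)
    show "inj_on fst (nbhd Et Q)"
    proof (rule inj_onI)
      fix y1 y2 assume y1: "y1 \<in> nbhd Et Q" and y2: "y2 \<in> nbhd Et Q" and f: "fst y1 = fst y2"
      obtain a1 a2 where aa: "a1 \<in> G" "y1 = psi a1" "a2 \<in> G" "y2 = psi a2"
        using y1 y2 Et_Vt Vt_psi by (metis mem_Collect_eq nbhd_def)
      have d1: "a1 \<cdot> gi a \<in> D" using y1 aa a Et_psi by (simp add: nbhd_def)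
      have d2: "a2 \<cdot> gi a \<in> D" using y2 aa a Et_psi by (simp add: nbhd_def)
      obtain l1 m1 where lm1: "l1 \<in> L" "m1 \<in> L" "a1 \<cdot> gi a = l1 \<cdot> b \<cdot> m1" using d1 by (auto simp: D_def)
      obtain l2 m2 where lm2: "l2 \<in> L" "m2 \<in> L" "a2 \<cdot> gi a = l2 \<cdot> b \<cdot> m2" using d2 by (auto simp: D_def)
      have "a1 = (a1 \<cdot> gi a) \<cdot> a" using a aa by (intro ext) (simp add: gs)
      then have u1: "a1 u = a (m1 v)" using lm1 L_u[OF lm1(1)] bu by (simp add: gs)
      have "a2 = (a2 \<cdot> gi a) \<cdot> a" using a aa by (intro ext) (simp add: gs)
      then have u2: "a2 u = a (m2 v)" using lm2 L_u[OF lm2(1)] bu by (simp add: gs)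
      have "a (m1 v) = a (m2 v)" using f aa u1 u2 by (simp add: fst_psi)
      then have "m1 v = m2 v" using G_inj[OF a(1)] by blast
      then have n: "(m1 \<cdot> gi m2) v = v" using gi_app1[OF LG[OF lm2(2)]] by (simp add: gs)
      have nL: "m1 \<cdot> gi m2 \<in> L" using lm1 lm2 L_mul L_inv by blast
      have "b \<cdot> (m1 \<cdot> gi m2) \<cdot> gi b \<in> L" using F3[OF nL n] .
      then have "l1 \<cdot> (b \<cdot> (m1 \<cdot> gi m2) \<cdot> gi b) \<cdot> gi l2 \<in> L" using lm1 lm2 L_mul L_inv by blast
      moreover have "a1 \<cdot> gi a2 = (a1 \<cdot> gi a) \<cdot> gi (a2 \<cdot> gi a)"
        using a aa by (intro ext) (simp add: gs gi_mul gi_gi gi_G)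
      moreover have "(l1 \<cdot> b \<cdot> m1) \<cdot> gi (l2 \<cdot> b \<cdot> m2) = l1 \<cdot> (b \<cdot> (m1 \<cdot> gi m2) \<cdot> gi b) \<cdot> gi l2"
        using bG LG lm1 lm2 by (intro ext) (simp add: gs gi_mul gi_gi gi_G mul_G)
      ultimately have "a1 \<cdot> gi a2 \<in> L" using lm1(3) lm2(3) by simp
      then show "y1 = y2" using psi_eq aa by simp
    qed
    show "fst ` nbhd Et Q = nbhd E (fst Q)"
    proof
      show "fst ` nbhd Et Q \<subseteq> nbhd E (fst Q)"
      proof
        fix y assume "y \<in> fst ` nbhd Et Q"
        then obtain R where "Et Q R" "y = fst R" by (auto simp: nbhd_def)
        then show "y \<in> nbhd E (fst Q)" using Et_fst by (simp add: nbhd_def)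
      qed
      show "nbhd E (fst Q) \<subseteq> fst ` nbhd Et Q"
      proof
        fix y assume y: "y \<in> nbhd E (fst Q)"
        then have "E (a u) y" using a by (simp add: nbhd_def fst_psi)
        then have "E (gi a (a u)) (gi a y)" using G_adj[OF gi_G[OF a(1)]] by blast
        then have "gi a y \<in> nbhd E u" using gi_app1[OF a(1)] by (simp add: nbhd_def)
        then obtain l where l: "l \<in> L" "l v = gi a y" using Ltrans by blast
        let ?R = "psi (b \<cdot> l \<cdot> a)"
        have bl: "b \<cdot> l \<in> D" using D_mulL[OF l(1) bD] .
        have "Et Q ?R" using Et_D[OF a(1) bl] a by simp
        moreover have "fst ?R = y" using l bu gi_app2[OF a(1)] by (simp add: fst_psi gs)
        ultimately show "y \<in> fst ` nbhd Et Q" by (force simp: nbhd_def)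
      qed
    qed
  qed
qed

lemma cov_proj: "covering_proj Vt Et V E fst"
  unfolding covering_proj_def
proof (intro conjI allI impI ballI)
  show "fst ` Vt = V" by (simp add: Vt_def)
  show "\<And>x y. Et x y \<Longrightarrow> E (fst x) (fst y)" by (rule Et_fst)
  show "\<And>x. x \<in> Vt \<Longrightarrow> bij_betw fst (nbhd Et x) (nbhd E (fst x))" by (rule nb_bij)
qed

end

context condA
begin

lemma lift_Vt: "Q \<in> Vt \<Longrightarrow> g \<in> G \<Longrightarrow> lift g Q \<in> Vt"
  using Vt_psi lift_psi psi_Vt mul_G by metis

lemma lift_out: "Q \<notin> Vt \<Longrightarrow> lift g Q = Q"
  by (simp add: lift_def)

lemma lift_comp: "g \<in> G \<Longrightarrow> g' \<in> G \<Longrightarrow> lift g' \<circ> lift g = lift (g \<cdot> g')"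
proof (rule ext)
  fix Q assume g: "g \<in> G" and g': "g' \<in> G"
  show "(lift g' \<circ> lift g) Q = lift (g \<cdot> g') Q"
  proof (cases "Q \<in> Vt")
    case True
    then obtain a where a: "a \<in> G" "Q = psi a" using Vt_psi by blast
    have "a \<cdot> g \<cdot> g' = a \<cdot> (g \<cdot> g')" by (intro ext) (simp add: gs)
    then show ?thesis using a g g' lift_psi mul_G by simp
  next
    case False then show ?thesis by (simp add: lift_out)
  qed
qed

lemma lift_id: "lift id = id"
proof (rule ext)
  fix Q show "lift id Q = id Q"
  proof (cases "Q \<in> Vt")
    case True
    then obtain a where a: "a \<in> G" "Q = psi a" using Vt_psi by blast
    have ai: "a \<cdot> id = a" by (intro ext) (simp add: gs)
    show ?thesis using lift_psi[OF a(1) one_G] a(2) unfolding ai by simp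
  next
    case False then show ?thesis by (simp add: lift_out)
  qed
qed

lemma g_gi: "g \<in> G \<Longrightarrow> g \<cdot> gi g = id" and gi_g: "g \<in> G \<Longrightarrow> gi g \<cdot> g = id"
  using one_eq by simp_all

lemma lift_inv1: "g \<in> G \<Longrightarrow> lift (gi g) \<circ> lift g = id"
  using lift_comp[of g "gi g"] gi_G g_gi lift_id by simp

lemma lift_inv2: "g \<in> G \<Longrightarrow> lift g \<circ> lift (gi g) = id"
  using lift_comp[of "gi g" g] gi_G gi_g lift_id by simp

lemma lift_adj: "g \<in> G \<Longrightarrow> Q \<in> Vt \<Longrightarrow> R \<in> Vt \<Longrightarrow> Et (lift g Q) (lift g R) = Et Q R"
proof -
  assume g: "g \<in> G" and Q: "Q \<in> Vt" and R: "R \<in> Vt"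
  obtain a where a: "a \<in> G" "Q = psi a" using Vt_psi Q by blast
  obtain a' where a': "a' \<in> G" "R = psi a'" using Vt_psi R by blast
  have "(a' \<cdot> g) \<cdot> gi (a \<cdot> g) = a' \<cdot> gi a" using a a' g by (intro ext) (simp add: gs gi_mul gi_G)
  then show ?thesis using a a' g lift_psi Et_psi mul_G by simp
qed

lemma lift_adj2: "g \<in> G \<Longrightarrow> Et Q R \<Longrightarrow> Et (lift g Q) (lift g R)"
  using lift_adj Et_Vt by blast

lemma lift_ga: "g \<in> G \<Longrightarrow> lift g \<in> graph_aut Vt Et"
  unfolding graph_aut_def
proof (intro CollectI conjI allI impI ballI)
  assume g: "g \<in> G"
  show "bij_betw (lift g) Vt Vt"
  proof (rule bij_betw_byWitness[where f'="lift (gi g)"])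
    show "\<forall>a\<in>Vt. lift (gi g) (lift g a) = a" using lift_inv1[OF g] by (metis comp_apply id_apply)
    show "\<forall>a\<in>Vt. lift g (lift (gi g) a) = a" using lift_inv2[OF g] by (metis comp_apply id_apply)
    show "lift g ` Vt \<subseteq> Vt" using lift_Vt g by blast
    show "lift (gi g) ` Vt \<subseteq> Vt" using lift_Vt gi_G g by blast
  qed
  show "\<And>x. x \<notin> Vt \<Longrightarrow> lift g x = x" by (rule lift_out)
  show "\<And>x y. x \<in> Vt \<Longrightarrow> y \<in> Vt \<Longrightarrow> Et x y = Et (lift g x) (lift g y)"
    using lift_adj g by simp
qed

lemma lift_fst: "g \<in> G \<Longrightarrow> Q \<in> Vt \<Longrightarrow> fst (lift g Q) = g (fst Q)"
proof -
  assume g: "g \<in> G" and Q: "Q \<in> Vt"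
  obtain a where a: "a \<in> G" "Q = psi a" using Vt_psi Q by blast
  then show ?thesis using g lift_psi by (simp add: fst_psi gs)
qed

lemma lift_is_lift: "g \<in> G \<Longrightarrow> is_lift Vt Et fst g (lift g)"
  using lift_ga lift_fst by (simp add: is_lift_def)

definition flip where "flip Q = (if Q \<in> Vt then (fst Q, \<not> snd Q) else Q)"

lemma flip_psi: "a \<in> G \<Longrightarrow> flip (psi a) = psi (h0 \<cdot> a)"
proof -
  assume a: "a \<in> G"
  have xV: "a u \<in> V" using G_in[OF a uV] .
  let ?T = "t (a u)"
  have T: "?T \<in> G" "?T u = a u" using t xV by blast+
  let ?c = "a \<cdot> gi ?T"
  have cH: "?c \<in> H" using T a gi_app1[OF T(1), of u] by (auto simp: stabilizer_def gs mul_G gi_G)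
  have e: "(h0 \<cdot> a) \<cdot> gi ?T = h0 \<cdot> ?c" by (intro ext) (simp add: gs)
  have "h0 \<cdot> ?c \<in> L \<longleftrightarrow> ?c \<notin> L"
  proof
    assume h: "h0 \<cdot> ?c \<in> L"
    show "?c \<notin> L"
    proof
      assume "?c \<in> L"
      then have "(h0 \<cdot> ?c) \<cdot> gi ?c \<in> L" using h L_mul L_inv by blast
      moreover have "(h0 \<cdot> ?c) \<cdot> gi ?c = h0" using h0(4) a T(1) by (intro ext) (simp add: gs gi_mul gi_gi gi_G)
      ultimately show False using h0(2) by simp
    qed
  next
    assume n: "?c \<notin> L"
    have "gi ?c \<in> H" "gi ?c \<notin> L" using H_inv[OF cH] n L_inv gi_gi H_G[OF cH] by metis+
    then have "h0 \<cdot> gi (gi ?c) \<in> L" using pairL h0(1,2) by blast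
    then show "h0 \<cdot> ?c \<in> L" using gi_gi H_G[OF cH] by simp
  qed
  moreover have "(h0 \<cdot> a) u = a u" using h0(5) by (simp add: gs)
  ultimately show ?thesis using psi_Vt[OF a] e by (simp add: flip_def psi_def)
qed

lemma flip_flip: "flip \<circ> flip = id"
proof (rule ext)
  fix Q show "(flip \<circ> flip) Q = id Q"
    by (cases "Q \<in> Vt") (auto simp: flip_def Vt_def mem_Times_iff)
qed

lemma flip_Vt: "Q \<in> Vt \<Longrightarrow> flip Q \<in> Vt"
  by (simp add: flip_def Vt_def mem_Times_iff)

lemma flip_ne: "Q \<in> Vt \<Longrightarrow> flip Q \<noteq> Q"
  by (simp add: flip_def prod_eq_iff)

lemma flip_ga: "flip \<in> graph_aut Vt Et"
  unfolding graph_aut_def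
proof (intro CollectI conjI allI impI ballI)
  show "bij_betw flip Vt Vt"
    by (rule bij_betw_byWitness[where f'=flip]) (auto simp: flip_def Vt_def)
  show "\<And>x. x \<notin> Vt \<Longrightarrow> flip x = x" by (simp add: flip_def)
  fix Q R assume Q: "Q \<in> Vt" and R: "R \<in> Vt"
  obtain a where a: "a \<in> G" "Q = psi a" using Vt_psi Q by blast
  obtain a' where a': "a' \<in> G" "R = psi a'" using Vt_psi R by blast
  have e: "(h0 \<cdot> a') \<cdot> gi (h0 \<cdot> a) = h0 \<cdot> (a' \<cdot> gi a) \<cdot> gi h0"
    using a a' h0(4) by (intro ext) (simp add: gs gi_mul gi_G)
  have e2: "gi h0 \<cdot> (h0 \<cdot> (a' \<cdot> gi a) \<cdot> gi h0) \<cdot> h0 = a' \<cdot> gi a"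
    using a a' h0(4) by (intro ext) (simp add: gs gi_mul gi_G)
  have "h0 \<cdot> (a' \<cdot> gi a) \<cdot> gi h0 \<in> D \<longleftrightarrow> a' \<cdot> gi a \<in> D"
    using D_h0 D_h0' e2 by metis
  then show "Et Q R = Et (flip Q) (flip R)"
    using a a' flip_psi Et_psi h0(4) mul_G e by simp
qed

lemma flip_ct: "flip \<in> cov_trans Vt Et fst"
  using flip_ga by (simp add: cov_trans_def flip_def)

lemma id_ct: "id \<in> cov_trans Vt Et fst"
  using ga_id by (simp add: cov_trans_def)

lemma fibre: "Q \<in> Vt \<Longrightarrow> R \<in> Vt \<Longrightarrow> fst Q = fst R \<Longrightarrow> R = Q \<or> R = flip Q"
  by (cases Q; cases R) (auto simp: flip_def)

lemma gen_path: "g \<in> generate (pgrp G) (insert b L) \<Longrightarrow> Et\<^sup>*\<^sup>* (psi id) (psi g)"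
proof (induction rule: generate.induct)
  case one then show ?case using one_eq by simp
next
  case (incl h)
  then show ?case
  proof
    assume "h = b"
    then have "Et (psi id) (psi h)" using Et_psi bD bG one_G by (simp add: one_eq[symmetric])
    then show ?thesis by (rule r_into_rtranclp)
  next
    assume "h \<in> L"
    then have "psi h = psi id" using psi_eq LG one_G by (simp add: one_eq[symmetric])
    then show ?thesis by (metis rtranclp.rtrancl_refl)
  qed
next
  case (inv h)
  then show ?case
  proof
    assume "h = b"
    then have "Et (psi id) (psi (gi h))" using Et_psi gib_D bG gi_G one_G by (simp add: one_eq[symmetric])
    then show ?thesis by (rule r_into_rtranclp)
  next
    assume "h \<in> L"
    then have "psi (gi h) = psi id" using psi_eq LG L_inv gi_G one_G by (simp add: one_eq[symmetric])
    then show ?thesis by (metis rtranclp.rtrancl_refl)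
  qed
next
  case (eng h1 h2)
  have h: "h1 \<in> G" "h2 \<in> G" using eng.hyps gen by blast+
  have "Et\<^sup>*\<^sup>* (lift h2 (psi id)) (lift h2 (psi h1))"
    by (rule rtranclp_map[OF lift_adj2[OF h(2)] eng.IH(1)])
  moreover have ih: "id \<cdot> h2 = h2" by (intro ext) (simp add: gs)
  ultimately have "Et\<^sup>*\<^sup>* (psi h2) (psi (h1 \<cdot> h2))"
    using lift_psi[OF one_G h(2)] lift_psi[OF h(1) h(2)] unfolding ih by simp
  then show ?case using eng.IH(2) by simp
qed

lemma Et_sym: "Et Q R \<Longrightarrow> Et R Q"
  using sgraph_t unfolding sgraph_def by blast

lemma conn_t: "connected_graph Vt Et"
  unfolding connected_graph_def
proof (intro conjI ballI)
  show "Vt \<noteq> {}" using uV by (auto simp: Vt_def)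
  fix Q R assume Q: "Q \<in> Vt" and R: "R \<in> Vt"
  obtain a where a: "a \<in> G" "Q = psi a" using Vt_psi Q by blast
  obtain a' where a': "a' \<in> G" "R = psi a'" using Vt_psi R by blast
  have p: "Et\<^sup>*\<^sup>* (psi id) Q" "Et\<^sup>*\<^sup>* (psi id) R" using gen_path gen a a' by blast+
  have sy: "\<And>x y. Et x y \<Longrightarrow> Et y x" by (rule Et_sym)
  have "Et\<^sup>*\<^sup>* Q (psi id)" by (rule rtranclp_sym[of Et, OF sy p(1)])
  then show "Et\<^sup>*\<^sup>* Q R" using p(2) by (rule rtranclp_trans)
qed

end

context condA
begin

lemma CT_eq: "cov_trans Vt Et fst = {id, flip}"
proof
  show "{id, flip} \<subseteq> cov_trans Vt Et fst" using id_ct flip_ct by blast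
  show "cov_trans Vt Et fst \<subseteq> {id, flip}"
  proof
    fix \<gamma> assume g: "\<gamma> \<in> cov_trans Vt Et fst"
    have ga: "\<gamma> \<in> graph_aut Vt Et" and gp: "\<forall>x\<in>Vt. fst (\<gamma> x) = fst x"
      using g by (auto simp: cov_trans_def)
    let ?Q0 = "psi id"
    have Q0: "?Q0 \<in> Vt" using psi_Vt one_G by blast
    have "\<gamma> ?Q0 \<in> Vt" using ga_in[OF ga Q0] .
    then have c: "\<gamma> ?Q0 = ?Q0 \<or> \<gamma> ?Q0 = flip ?Q0" using fibre[OF Q0] gp Q0 by metis
    have path: "\<And>y. y \<in> Vt \<Longrightarrow> Et\<^sup>*\<^sup>* ?Q0 y" using conn_t Q0 by (simp add: connected_graph_def)
    show "\<gamma> \<in> {id, flip}"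
    proof (cases "\<gamma> ?Q0 = ?Q0")
      case True
      have "\<gamma> = id"
      proof
        fix y show "\<gamma> y = id y"
        proof (cases "y \<in> Vt")
          case True
          show ?thesis
            by (rule ct_agree[OF sgraph_t cov_proj ga ga_id _ _ path[OF True]])
               (use gp \<open>\<gamma> ?Q0 = ?Q0\<close> in simp_all)
        next
          case False then show ?thesis using ga_out[OF ga] by simp
        qed
      qed
      then show ?thesis by simp
    next
      case False
      then have e: "\<gamma> ?Q0 = flip ?Q0" using c by blast
      have "\<gamma> = flip"
      proof
        fix y show "\<gamma> y = flip y"
        proof (cases "y \<in> Vt")
          case True
          show ?thesis
            by (rule ct_agree[OF sgraph_t cov_proj ga flip_ga _ e path[OF True]])
               (use gp in \<open>simp add: flip_def\<close>)
        next
          case False then show ?thesis using ga_out[OF ga] by (simp add: flip_def)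
        qed
      qed
      then show ?thesis by simp
    qed
  qed
qed

lemma reg_cov: "regular_covering Vt Et V E fst"
  unfolding regular_covering_def
proof (intro conjI ballI impI)
  show "covering_proj Vt Et V E fst" by (rule cov_proj)
  fix x y assume x: "x \<in> Vt" and y: "y \<in> Vt" and f: "fst x = fst y"
  have yy: "y = x \<or> y = flip x" using fibre[OF x y f] .
  have ne: "flip x \<noteq> x" using flip_ne[OF x] .
  show "\<exists>!c. c \<in> cov_trans Vt Et fst \<and> c x = y"
    unfolding CT_eq using yy ne by auto
qed

lemma flip_ne_id: "flip \<noteq> id"
proof
  assume "flip = id"
  then have "flip (psi id) = psi id" by simp
  then show False using flip_ne psi_Vt one_G by blast
qed

lemma two_cov: "two_cover Vt Et V E fst"
  unfolding two_cover_def CT_eq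
  using sgraph_t reg_cov z2_iso[OF flip_ne_id flip_flip] by blast

abbreviation "LGt \<equiv> lifted_group Vt Et fst G"
abbreviation "Gb \<equiv> lift ` G"

lemma lift_LG: "g \<in> G \<Longrightarrow> lift g \<in> LGt"
  using lift_is_lift by (auto simp: lifted_group_def)

lemma Gb_sub: "subgroup Gb (pgrp LGt)"
proof (rule subgroup.intro)
  show "Gb \<subseteq> carrier (pgrp LGt)" using lift_LG by auto
  fix x y assume x: "x \<in> Gb" and y: "y \<in> Gb"
  then obtain g g' where g: "g \<in> G" "x = lift g" "g' \<in> G" "y = lift g'" by blast
  show "x \<otimes>\<^bsub>pgrp LGt\<^esub> y \<in> Gb"
    using g lift_comp mul_G by (simp add: pgrp_mult)
next
  show "\<one>\<^bsub>pgrp LGt\<^esub> \<in> Gb" using lift_id one_G by (metis image_eqI pgrp_one)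
next
  fix x assume "x \<in> Gb"
  then obtain g where g: "g \<in> G" "x = lift g" by blast
  have "inv\<^bsub>pgrp LGt\<^esub> x = lift (gi g)"
    using pgrp_inv_eq[OF lift_LG[OF gi_G[OF g(1)]]] lift_inv1 lift_inv2 g by simp
  then show "inv\<^bsub>pgrp LGt\<^esub> x \<in> Gb" using gi_G g by simp
qed

lemma Gb_CT: "Gb \<inter> cov_trans Vt Et fst = {id}"
proof
  show "{id} \<subseteq> Gb \<inter> cov_trans Vt Et fst" using lift_id one_G id_ct by force
  show "Gb \<inter> cov_trans Vt Et fst \<subseteq> {id}"
  proof
    fix c assume c: "c \<in> Gb \<inter> cov_trans Vt Et fst"
    then obtain g where g: "g \<in> G" "c = lift g" by blast
    have "\<forall>x\<in>Vt. fst (c x) = fst x" using c by (simp add: cov_trans_def)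
    then have gx: "\<And>x. x \<in> V \<Longrightarrow> g x = x" using lift_fst g by (force simp: Vt_def)
    have "g = id"
    proof
      fix x show "g x = id x"
        using gx ga_out[OF GA[OF g(1)]] by (cases "x \<in> V") auto
    qed
    then show "c \<in> {id}" using g lift_id by simp
  qed
qed

lemma CT_Gb: "cov_trans Vt Et fst <#>\<^bsub>pgrp LGt\<^esub> Gb = LGt"
proof
  show "cov_trans Vt Et fst <#>\<^bsub>pgrp LGt\<^esub> Gb \<subseteq> LGt"
  proof
    fix z assume "z \<in> cov_trans Vt Et fst <#>\<^bsub>pgrp LGt\<^esub> Gb"
    then obtain c g where c: "c \<in> cov_trans Vt Et fst" and g: "g \<in> G" and z: "z = lift g \<circ> c"
      by (auto simp: set_mult_def pgrp_mult)
    have cg: "c \<in> graph_aut Vt Et" "\<forall>x\<in>Vt. fst (c x) = fst x" using c by (auto simp: cov_trans_def)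
    have "is_lift Vt Et fst g z"
      unfolding is_lift_def z
    proof (intro conjI ballI)
      show "lift g \<circ> c \<in> graph_aut Vt Et" using ga_comp cg lift_ga g by blast
      fix x assume x: "x \<in> Vt"
      show "fst ((lift g \<circ> c) x) = g (fst x)" using lift_fst[OF g ga_in[OF cg(1) x]] cg(2) x by simp
    qed
    then show "z \<in> LGt" using g by (auto simp: lifted_group_def)
  qed
  show "LGt \<subseteq> cov_trans Vt Et fst <#>\<^bsub>pgrp LGt\<^esub> Gb"
  proof
    fix z assume "z \<in> LGt"
    then obtain g where g: "g \<in> G" "is_lift Vt Et fst g z" by (auto simp: lifted_group_def)
    have zg: "z \<in> graph_aut Vt Et" "\<forall>x\<in>Vt. fst (z x) = g (fst x)" using g by (auto simp: is_lift_def)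
    let ?c = "lift (gi g) \<circ> z"
    have "?c \<in> cov_trans Vt Et fst"
      unfolding cov_trans_def
    proof (intro CollectI conjI ballI)
      show "?c \<in> graph_aut Vt Et" using ga_comp zg lift_ga gi_G g by blast
      fix x assume x: "x \<in> Vt"
      have "fst (?c x) = gi g (fst (z x))" using lift_fst[OF gi_G[OF g(1)] ga_in[OF zg(1) x]] by simp
      also have "\<dots> = fst x" using zg(2) x gi_app1[OF g(1)] by simp
      finally show "fst (?c x) = fst x" .
    qed
    moreover have "lift g \<circ> ?c = z" using lift_inv2[OF g(1)] by (simp add: comp_assoc[symmetric])
    ultimately have "z = ?c \<otimes>\<^bsub>pgrp LGt\<^esub> lift g" by (simp add: pgrp_mult)
    then show "z \<in> cov_trans Vt Et fst <#>\<^bsub>pgrp LGt\<^esub> Gb"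
      using \<open>?c \<in> cov_trans Vt Et fst\<close> g(1) unfolding set_mult_def by blast
  qed
qed

lemma Gb_trans: "\<forall>x\<in>Vt. \<forall>y\<in>Vt. \<exists>c\<in>Gb. c x = y"
proof (intro ballI)
  fix x y assume x: "x \<in> Vt" and y: "y \<in> Vt"
  obtain a where a: "a \<in> G" "x = psi a" using Vt_psi x by blast
  obtain a' where a': "a' \<in> G" "y = psi a'" using Vt_psi y by blast
  have e: "a \<cdot> (gi a \<cdot> a') = a'" using a a' by (intro ext) (simp add: gs)
  have "lift (gi a \<cdot> a') x = y" using lift_psi[OF a(1) mul_G[OF gi_G[OF a(1)] a'(1)]] a a' unfolding e by simp
  then show "\<exists>c\<in>Gb. c x = y" using mul_G gi_G a a' by blast
qed

lemma good: "good_cover Vt Et V E G fst"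
  unfolding good_cover_def split_cover_transitive_complement_def is_complement_def
  using two_cov conn_t lift_is_lift Gb_sub Gb_CT CT_Gb Gb_trans by blast

end

locale condB = cgraph +
  fixes Vt and Et and p
  assumes gc: "good_cover Vt Et V E G p"
begin

abbreviation "CT \<equiv> cov_trans Vt Et p"
abbreviation "LGt \<equiv> lifted_group Vt Et p G"

lemma sgt: "sgraph Vt Et" and reg: "regular_covering Vt Et V E p"
  and isoZ: "pgrp CT \<cong> integer_mod_group 2" and connt: "connected_graph Vt Et"
  and lifts: "\<forall>g\<in>G. \<exists>gt. is_lift Vt Et p g gt"
  and exGb: "\<exists>Gb. is_complement Vt Et p G Gb \<and> (\<forall>x\<in>Vt. \<forall>y\<in>Vt. \<exists>c\<in>Gb. c x = y)"
  using gc by (auto simp: good_cover_def two_cover_def split_cover_transitive_complement_def)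

lemma cp: "covering_proj Vt Et V E p"
  using reg by (simp add: regular_covering_def)

lemma p_Vt: "p ` Vt = V" using cp by (simp add: covering_proj_def)

lemma p_adj: "Et x y \<Longrightarrow> E (p x) (p y)" using cp by (simp add: covering_proj_def)

lemma p_nb: "x \<in> Vt \<Longrightarrow> bij_betw p (nbhd Et x) (nbhd E (p x))" using cp by (simp add: covering_proj_def)

lemma Et_Vt: "Et x y \<Longrightarrow> x \<in> Vt \<and> y \<in> Vt" using sgt by (simp add: sgraph_def)

lemma Et_sym: "Et x y \<Longrightarrow> Et y x" using sgt unfolding sgraph_def by blast

lemma path: "x \<in> Vt \<Longrightarrow> y \<in> Vt \<Longrightarrow> Et\<^sup>*\<^sup>* x y" using connt by (simp add: connected_graph_def)

lemma agree:
  assumes g1: "\<gamma>1 \<in> graph_aut Vt Et" and g2: "\<gamma>2 \<in> graph_aut Vt Et"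
    and pp: "\<forall>x\<in>Vt. p (\<gamma>1 x) = p (\<gamma>2 x)" and x0: "x0 \<in> Vt" "\<gamma>1 x0 = \<gamma>2 x0"
  shows "\<gamma>1 = \<gamma>2"
proof
  fix y show "\<gamma>1 y = \<gamma>2 y"
  proof (cases "y \<in> Vt")
    case True
    show ?thesis by (rule ct_agree[OF sgt cp g1 g2 pp x0(2) path[OF x0(1) True]])
  next
    case False then show ?thesis using ga_out g1 g2 by metis
  qed
qed

lemma id_CT: "id \<in> CT" using ga_id by (simp add: cov_trans_def)

lemma CT_comp: "c1 \<in> CT \<Longrightarrow> c2 \<in> CT \<Longrightarrow> c2 \<circ> c1 \<in> CT"
  by (auto simp: cov_trans_def ga_comp ga_in)

lemma card_CT: "card CT = 2"
  using iso_same_card[OF isoZ] by (simp add: carrier_integer_mod_group)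

definition c where "c = (SOME c. c \<in> CT \<and> c \<noteq> id)"

lemma c_ex: "\<exists>c. c \<in> CT \<and> c \<noteq> id"
proof -
  obtain x y where xy: "CT = {x, y}" "x \<noteq> y" using card_CT card_2_iff by metis
  then show ?thesis by (cases "x = id") auto
qed

lemma c: "c \<in> CT" "c \<noteq> id"
  using someI_ex[OF c_ex] unfolding c_def by blast+

lemma CT_eq: "CT = {id, c}"
proof -
  have "{id, c} \<subseteq> CT" using id_CT c by blast
  moreover have "card {id, c} = 2" using c(2) by simp
  moreover have "finite CT" using card_CT by (metis card.infinite zero_neq_numeral)
  ultimately show ?thesis using card_CT by (metis card_subset_eq)
qed

lemma c_ga: "c \<in> graph_aut Vt Et" and c_p: "x \<in> Vt \<Longrightarrow> p (c x) = p x"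
  using c(1) by (auto simp: cov_trans_def)

lemma c_Vt: "x \<in> Vt \<Longrightarrow> c x \<in> Vt" using ga_in[OF c_ga] .

lemma c_c: "c \<circ> c = id"
proof -
  have "c \<circ> c \<in> CT" using CT_comp c by blast
  moreover have "c \<circ> c \<noteq> c"
  proof
    assume "c \<circ> c = c"
    then have "\<And>x. c (c x) = c x" by (metis comp_apply)
    then have "\<And>x. c x = x" using ga_inj[OF c_ga] by blast
    then show False using c(2) by auto
  qed
  ultimately show ?thesis using CT_eq by blast
qed

lemma fibre: "x \<in> Vt \<Longrightarrow> y \<in> Vt \<Longrightarrow> p x = p y \<Longrightarrow> y = x \<or> y = c x"
proof -
  assume "x \<in> Vt" "y \<in> Vt" "p x = p y"
  then obtain \<gamma> where "\<gamma> \<in> CT" "\<gamma> x = y" using reg unfolding regular_covering_def by blast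
  then show ?thesis using CT_eq by auto
qed

lemma c_ne: "x \<in> Vt \<Longrightarrow> c x \<noteq> x"
proof
  assume x: "x \<in> Vt" and e: "c x = x"
  have "\<exists>!\<gamma>. \<gamma> \<in> CT \<and> \<gamma> x = x" using reg x unfolding regular_covering_def by blast
  then show False using e id_CT c by (metis id_apply)
qed

definition Gb where "Gb = (SOME Gb. is_complement Vt Et p G Gb \<and> (\<forall>x\<in>Vt. \<forall>y\<in>Vt. \<exists>c\<in>Gb. c x = y))"

lemma Gb: "is_complement Vt Et p G Gb" "\<forall>x\<in>Vt. \<forall>y\<in>Vt. \<exists>c\<in>Gb. c x = y"
  using someI_ex[OF exGb] unfolding Gb_def by blast+

lemma Gb_sub: "subgroup Gb (pgrp LGt)" and Gb_CT: "Gb \<inter> CT = {id}" and CT_Gb: "CT <#>\<^bsub>pgrp LGt\<^esub> Gb = LGt"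
  using Gb(1) by (auto simp: is_complement_def)

lemma Gb_LG: "\<gamma> \<in> Gb \<Longrightarrow> \<gamma> \<in> LGt"
  using subgroup.subset[OF Gb_sub] by auto

lemma LG_lift: "\<gamma> \<in> LGt \<Longrightarrow> \<exists>g\<in>G. is_lift Vt Et p g \<gamma>"
  by (simp add: lifted_group_def)

lemma Gb_ga: "\<gamma> \<in> Gb \<Longrightarrow> \<gamma> \<in> graph_aut Vt Et"
  using Gb_LG LG_lift by (auto simp: is_lift_def)

lemma Gb_comp: "\<gamma> \<in> Gb \<Longrightarrow> \<gamma>' \<in> Gb \<Longrightarrow> \<gamma>' \<circ> \<gamma> \<in> Gb"
  using subgroup.m_closed[OF Gb_sub] by (simp add: pgrp_mult)

lemma lift_g_unique:
  assumes "g \<in> G" "g' \<in> G" "is_lift Vt Et p g \<gamma>" "is_lift Vt Et p g' \<gamma>"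
  shows "g = g'"
proof
  fix x show "g x = g' x"
  proof (cases "x \<in> V")
    case True
    then obtain y where "y \<in> Vt" "x = p y" using p_Vt by blast
    then show ?thesis using assms(3,4) by (simp add: is_lift_def)
  next
    case False then show ?thesis using ga_out GA assms(1,2) by metis
  qed
qed

lemma inv_lift:
  assumes g: "g \<in> G" and l: "is_lift Vt Et p g \<gamma>"
  shows "is_lift Vt Et p (gi g) (inv_into UNIV \<gamma>)"
proof -
  have ga: "\<gamma> \<in> graph_aut Vt Et" using l by (simp add: is_lift_def)
  have b: "bij \<gamma>" using ga_bij[OF ga] .
  have i2: "\<And>x. \<gamma> (inv_into UNIV \<gamma> x) = x" using b by (simp add: bij_def surj_f_inv_f)
  have iga: "inv_into UNIV \<gamma> \<in> graph_aut Vt Et" using ga_invf[OF ga] .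
  show ?thesis unfolding is_lift_def
  proof (intro conjI ballI)
    show "inv_into UNIV \<gamma> \<in> graph_aut Vt Et" by (rule iga)
    fix x assume x: "x \<in> Vt"
    have "p (\<gamma> (inv_into UNIV \<gamma> x)) = g (p (inv_into UNIV \<gamma> x))"
      using l ga_in[OF iga x] by (simp add: is_lift_def)
    then have "p x = g (p (inv_into UNIV \<gamma> x))" using i2 by simp
    then show "p (inv_into UNIV \<gamma> x) = gi g (p x)" using gi_app1[OF g] by simp
  qed
qed

lemma Gb_inv: "\<gamma> \<in> Gb \<Longrightarrow> inv_into UNIV \<gamma> \<in> Gb"
proof -
  assume gb: "\<gamma> \<in> Gb"
  obtain g where g: "g \<in> G" "is_lift Vt Et p g \<gamma>" using LG_lift Gb_LG gb by blast
  have b: "bij \<gamma>" using ga_bij[OF Gb_ga[OF gb]] .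
  have "inv_into UNIV \<gamma> \<in> LGt" using inv_lift[OF g] gi_G g(1) by (auto simp: lifted_group_def)
  moreover have "inv_into UNIV \<gamma> \<circ> \<gamma> = id" "\<gamma> \<circ> inv_into UNIV \<gamma> = id"
    using b by (auto simp: bij_def surj_iff inj_iff)
  ultimately have "inv\<^bsub>pgrp LGt\<^esub> \<gamma> = inv_into UNIV \<gamma>" by (rule pgrp_inv_eq)
  then show ?thesis using subgroup.m_inv_closed[OF Gb_sub gb] by simp
qed

end

context condB
begin

lemma lift_comm_c:
  assumes ga: "\<gamma> \<in> graph_aut Vt Et" and l: "\<forall>x\<in>Vt. p (\<gamma> x) = g (p x)" and x: "x \<in> Vt"
  shows "\<gamma> (c x) = c (\<gamma> x)"
proof -
  have "\<gamma> (c x) \<in> Vt" "\<gamma> x \<in> Vt" using ga_in[OF ga] c_Vt x by blast+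
  moreover have "p (\<gamma> (c x)) = p (\<gamma> x)" using l x c_Vt c_p by simp
  ultimately have "\<gamma> (c x) = \<gamma> x \<or> \<gamma> (c x) = c (\<gamma> x)" using fibre by metis
  moreover have "\<gamma> (c x) \<noteq> \<gamma> x" using ga_inj[OF ga] c_ne[OF x] by metis
  ultimately show ?thesis by blast
qed

lemma phi_ex: "g \<in> G \<Longrightarrow> \<exists>\<gamma>\<in>Gb. is_lift Vt Et p g \<gamma>"
proof -
  assume g: "g \<in> G"
  obtain \<gamma>0 where l0: "is_lift Vt Et p g \<gamma>0" using lifts g by blast
  then have "\<gamma>0 \<in> LGt" using g by (auto simp: lifted_group_def)
  then have "\<gamma>0 \<in> CT <#>\<^bsub>pgrp LGt\<^esub> Gb" using CT_Gb by simp
  then obtain c' \<gamma> where c': "c' \<in> CT" and gb: "\<gamma> \<in> Gb" and e: "\<gamma>0 = \<gamma> \<circ> c'"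
    by (auto simp: set_mult_def pgrp_mult)
  have cc: "c' \<circ> c' = id" using c' CT_eq c_c by auto
  have "\<gamma> = \<gamma>0 \<circ> c'" using e cc by (simp add: comp_assoc)
  have ga: "\<gamma> \<in> graph_aut Vt Et" using Gb_ga gb .
  have "\<forall>x\<in>Vt. p (\<gamma> x) = g (p x)"
  proof
    fix x assume x: "x \<in> Vt"
    have cx: "c' x \<in> Vt" "p (c' x) = p x" using c' x by (auto simp: cov_trans_def ga_in)
    have "p (\<gamma> x) = p (\<gamma>0 (c' x))" using \<open>\<gamma> = \<gamma>0 \<circ> c'\<close> by simp
    also have "\<dots> = g (p (c' x))" using l0 cx by (simp add: is_lift_def)
    finally show "p (\<gamma> x) = g (p x)" using cx by simp
  qed
  then show ?thesis using gb ga by (auto simp: is_lift_def)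
qed

lemma x0: "\<exists>x. x \<in> Vt" using connt by (auto simp: connected_graph_def)

lemma phi_uniq:
  assumes g1: "\<gamma> \<in> Gb" "is_lift Vt Et p g \<gamma>" and g2: "\<gamma>' \<in> Gb" "is_lift Vt Et p g \<gamma>'"
  shows "\<gamma> = \<gamma>'"
proof -
  obtain x where x: "x \<in> Vt" using x0 by blast
  have ga: "\<gamma> \<in> graph_aut Vt Et" "\<gamma>' \<in> graph_aut Vt Et" using g1 g2 Gb_ga by blast+
  have pl: "\<forall>x\<in>Vt. p (\<gamma> x) = g (p x)" "\<forall>x\<in>Vt. p (\<gamma>' x) = g (p x)"
    using g1 g2 by (auto simp: is_lift_def)
  have "\<gamma>' x = \<gamma> x \<or> \<gamma>' x = c (\<gamma> x)"
    using fibre ga_in[OF ga(1) x] ga_in[OF ga(2) x] pl x by metis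
  then show ?thesis
  proof
    assume "\<gamma>' x = \<gamma> x"
    then show ?thesis using agree[OF ga(1) ga(2) _ x] pl by simp
  next
    assume e: "\<gamma>' x = c (\<gamma> x)"
    have cg: "c \<circ> \<gamma> \<in> graph_aut Vt Et" using ga_comp ga(1) c_ga by blast
    have "\<forall>y\<in>Vt. p (\<gamma>' y) = p ((c \<circ> \<gamma>) y)" using pl c_p ga_in[OF ga(1)] by simp
    then have "\<gamma>' = c \<circ> \<gamma>" using agree[OF ga(2) cg _ x] e by simp
    then have "\<gamma>' \<circ> inv_into UNIV \<gamma> = c"
      using ga_bij[OF ga(1)] by (simp add: comp_assoc bij_def surj_iff)
    moreover have "\<gamma>' \<circ> inv_into UNIV \<gamma> \<in> Gb" using Gb_comp Gb_inv g1 g2 by blast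
    ultimately have "c \<in> Gb \<inter> CT" using c by simp
    then show ?thesis using Gb_CT c(2) by blast
  qed
qed

definition phi where "phi g = (THE \<gamma>. \<gamma> \<in> Gb \<and> is_lift Vt Et p g \<gamma>)"

lemma phi_ex1: "g \<in> G \<Longrightarrow> \<exists>!\<gamma>. \<gamma> \<in> Gb \<and> is_lift Vt Et p g \<gamma>"
proof -
  assume g: "g \<in> G"
  obtain \<gamma> where gm: "\<gamma> \<in> Gb" "is_lift Vt Et p g \<gamma>" using phi_ex[OF g] by blast
  show ?thesis
  proof (rule ex1I[where a=\<gamma>])
    show "\<gamma> \<in> Gb \<and> is_lift Vt Et p g \<gamma>" using gm by blast
    fix \<gamma>' assume "\<gamma>' \<in> Gb \<and> is_lift Vt Et p g \<gamma>'"
    then show "\<gamma>' = \<gamma>" using phi_uniq[OF _ _ gm] by blast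
  qed
qed

lemma phi: "g \<in> G \<Longrightarrow> phi g \<in> Gb \<and> is_lift Vt Et p g (phi g)"
  unfolding phi_def by (rule theI'[OF phi_ex1])

lemma phi_eqI: "g \<in> G \<Longrightarrow> \<gamma> \<in> Gb \<Longrightarrow> is_lift Vt Et p g \<gamma> \<Longrightarrow> phi g = \<gamma>"
proof -
  assume a: "g \<in> G" "\<gamma> \<in> Gb" "is_lift Vt Et p g \<gamma>"
  have "phi g \<in> Gb" "is_lift Vt Et p g (phi g)" using phi[OF a(1)] by blast+
  then show ?thesis using phi_uniq a(2,3) by blast
qed

lemma phi_Gb: "g \<in> G \<Longrightarrow> phi g \<in> Gb" using phi by blast
lemma phi_ga: "g \<in> G \<Longrightarrow> phi g \<in> graph_aut Vt Et" using phi_Gb Gb_ga by blast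
lemma phi_p: "g \<in> G \<Longrightarrow> x \<in> Vt \<Longrightarrow> p (phi g x) = g (p x)" using phi by (simp add: is_lift_def)
lemma phi_Vt: "g \<in> G \<Longrightarrow> x \<in> Vt \<Longrightarrow> phi g x \<in> Vt" by (rule ga_in[OF phi_ga])

lemma phi_mul: "g \<in> G \<Longrightarrow> h \<in> G \<Longrightarrow> phi (g \<cdot> h) = phi h \<circ> phi g"
proof -
  assume g: "g \<in> G" and h: "h \<in> G"
  show ?thesis
  proof (rule phi_eqI[OF mul_G[OF g h]])
    show "phi h \<circ> phi g \<in> Gb" using Gb_comp phi_Gb g h by blast
    show "is_lift Vt Et p (g \<cdot> h) (phi h \<circ> phi g)"
      unfolding is_lift_def using ga_comp[OF phi_ga[OF g] phi_ga[OF h]] g h phi_p phi_Vt by (simp add: app_mul)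
  qed
qed

lemma phi_id: "phi id = id"
proof (rule phi_eqI[OF one_G])
  have "\<one>\<^bsub>pgrp LGt\<^esub> \<in> Gb" using subgroup.one_closed[OF Gb_sub] .
  then show "id \<in> Gb" by (simp add: pgrp_one)
  show "is_lift Vt Et p id id" using ga_id by (simp add: is_lift_def)
qed

lemma phi_inv1: "g \<in> G \<Longrightarrow> phi (gi g) (phi g x) = x"
proof -
  assume g: "g \<in> G"
  have "phi (g \<cdot> gi g) = phi (gi g) \<circ> phi g" using phi_mul g gi_G by blast
  moreover have "g \<cdot> gi g = id" using g one_eq by simp
  ultimately show ?thesis using phi_id by (metis comp_apply id_apply)
qed

lemma phi_inv2: "g \<in> G \<Longrightarrow> phi g (phi (gi g) x) = x"
proof -
  assume g: "g \<in> G"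
  have "phi (gi g \<cdot> g) = phi g \<circ> phi (gi g)" using phi_mul g gi_G by blast
  moreover have "gi g \<cdot> g = id" using g one_eq by simp
  ultimately show ?thesis using phi_id by (metis comp_apply id_apply)
qed

lemma phi_surj: "\<gamma> \<in> Gb \<Longrightarrow> \<exists>g\<in>G. phi g = \<gamma>"
proof -
  assume gb: "\<gamma> \<in> Gb"
  obtain g where g: "g \<in> G" "is_lift Vt Et p g \<gamma>" using LG_lift[OF Gb_LG[OF gb]] by blast
  then show ?thesis using phi_eqI[OF g(1) gb g(2)] by blast
qed

lemma phi_adj: "g \<in> G \<Longrightarrow> Et x y \<Longrightarrow> Et (phi g x) (phi g y)"
proof -
  assume g: "g \<in> G" and e: "Et x y"
  have "x \<in> Vt" "y \<in> Vt" using Et_Vt[OF e] by blast+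
  then show ?thesis using ga_adj[OF phi_ga[OF g]] e by simp
qed

end

context condB
begin

lemmas gs = app_mul gi_app1 gi_app2

definition ut where "ut = (SOME x. x \<in> Vt \<and> p x = u)"

lemma ut: "ut \<in> Vt" "p ut = u"
proof -
  have "\<exists>x. x \<in> Vt \<and> p x = u" using p_Vt uV by blast
  then show "ut \<in> Vt" "p ut = u" using someI_ex unfolding ut_def by (metis (mono_tags, lifting))+
qed

definition vt where "vt = (SOME y. Et ut y \<and> p y = v)"

lemma vt: "Et ut vt" "p vt = v"
proof -
  have "v \<in> nbhd E (p ut)" using euv ut by (simp add: nbhd_def)
  then have "v \<in> p ` nbhd Et ut" using p_nb[OF ut(1)] by (simp add: bij_betw_def)
  then have "\<exists>y. Et ut y \<and> p y = v" by (auto simp: nbhd_def)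
  then show "Et ut vt" "p vt = v" using someI_ex unfolding vt_def by (metis (mono_tags, lifting))+
qed

lemma vt_Vt: "vt \<in> Vt" using Et_Vt vt(1) by blast

definition L where "L = {g \<in> G. phi g ut = ut}"

lemma Lcos: "g \<in> G \<Longrightarrow> h \<in> G \<Longrightarrow> g \<cdot> gi h \<in> L \<longleftrightarrow> phi g ut = phi h ut"
proof -
  assume g: "g \<in> G" and h: "h \<in> G"
  have "phi (g \<cdot> gi h) ut = phi (gi h) (phi g ut)" using phi_mul g gi_G h by simp
  then have "g \<cdot> gi h \<in> L \<longleftrightarrow> phi (gi h) (phi g ut) = ut" using mul_G g gi_G h by (simp add: L_def)
  also have "\<dots> \<longleftrightarrow> phi g ut = phi h ut"
    using phi_inv1[OF h] phi_inv2[OF h] by metis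
  finally show ?thesis .
qed

lemma L_G: "l \<in> L \<Longrightarrow> l \<in> G" by (simp add: L_def)
lemma L_fix: "l \<in> L \<Longrightarrow> phi l ut = ut" by (simp add: L_def)

lemma Lsub: "subgroup L (pgrp G)"
proof (rule Gr.subgroupI)
  show "L \<subseteq> carrier (pgrp G)" by (auto simp: L_def)
  show "L \<noteq> {}" using one_G phi_id by (auto simp: L_def)
  fix a assume a: "a \<in> L"
  show "gi a \<in> L" using a phi_inv1[OF L_G[OF a], of ut] gi_G by (simp add: L_def)
  fix b assume b: "b \<in> L"
  show "a \<cdot> b \<in> L" using a b phi_mul mul_G by (simp add: L_def)
qed

lemma L_u: "l \<in> L \<Longrightarrow> l u = u"
  using phi_p[OF L_G ut(1)] L_fix ut(2) by metis

lemma LH: "L \<subseteq> H" using L_u L_G by (auto simp: stabilizer_def)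

lemma phi_c: "g \<in> G \<Longrightarrow> x \<in> Vt \<Longrightarrow> phi g (c x) = c (phi g x)"
  using lift_comm_c[OF phi_ga] phi_p by blast

lemma H_fib: "h \<in> H \<Longrightarrow> phi h ut = ut \<or> phi h ut = c ut"
proof -
  assume h: "h \<in> H"
  have "p (phi h ut) = p ut" using phi_p[OF H_G[OF h] ut(1)] H_u[OF h] ut(2) by simp
  then show ?thesis using fibre[OF ut(1) phi_Vt[OF H_G[OF h] ut(1)]] by metis
qed

lemma sqB: "\<forall>h\<in>H. h \<cdot> h \<in> L"
proof
  fix h assume h: "h \<in> H"
  have hG: "h \<in> G" using H_G h .
  have "phi (h \<cdot> h) ut = phi h (phi h ut)" using phi_mul hG by simp
  moreover have "phi h (phi h ut) = ut"
    using H_fib[OF h]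
  proof
    assume "phi h ut = ut" then show ?thesis by simp
  next
    assume e: "phi h ut = c ut"
    have "phi h (c ut) = c (phi h ut)" using phi_c hG ut(1) by blast
    then show ?thesis using e c_c by (metis comp_apply id_apply)
  qed
  ultimately show "h \<cdot> h \<in> L" using mul_G hG by (simp add: L_def)
qed

lemma LtransB: "\<forall>w\<in>nbhd E u. \<exists>l\<in>L. l v = w"
  using nb_orbit[OF Lsub LH sqB] .

lemma Ltil: "y \<in> nbhd Et ut \<Longrightarrow> \<exists>l\<in>L. phi l vt = y"
proof -
  assume y: "y \<in> nbhd Et ut"
  have "Et ut y" using y by (simp add: nbhd_def)
  then have "E (p ut) (p y)" by (rule p_adj)
  then have "p y \<in> nbhd E u" using ut(2) by (simp add: nbhd_def)
  then obtain l where l: "l \<in> L" "l v = p y" using LtransB by blast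
  have "Et ut (phi l vt)" using phi_adj[OF L_G[OF l(1)] vt(1)] L_fix[OF l(1)] by simp
  moreover have "p (phi l vt) = p y" using phi_p[OF L_G[OF l(1)] vt_Vt] vt(2) l(2) by simp
  ultimately have "phi l vt = y"
    using y p_nb[OF ut(1)] by (auto simp: bij_betw_def inj_on_def nbhd_def)
  then show ?thesis using l by blast
qed

lemma orbit_vt: "(\<lambda>l. phi l vt) ` L = nbhd Et ut"
proof
  show "(\<lambda>l. phi l vt) ` L \<subseteq> nbhd Et ut"
    using phi_adj[OF L_G vt(1)] L_fix by (auto simp: nbhd_def)
  show "nbhd Et ut \<subseteq> (\<lambda>l. phi l vt) ` L" using Ltil by force
qed

definition bt where "bt = (SOME g. g \<in> G \<and> phi g ut = vt \<and> phi g vt = ut)"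

lemma bt_ex: "\<exists>g. g \<in> G \<and> phi g ut = vt \<and> phi g vt = ut"
proof -
  obtain \<tau> where t: "\<tau> \<in> Gb" "\<tau> vt = ut" using Gb(2) vt_Vt ut(1) by blast
  obtain g0 where g0: "g0 \<in> G" "phi g0 = \<tau>" using phi_surj[OF t(1)] by blast
  have "Et (phi g0 ut) (phi g0 vt)" using phi_adj[OF g0(1) vt(1)] .
  then have "phi g0 ut \<in> nbhd Et ut" using g0 t Et_sym by (simp add: nbhd_def)
  then obtain l where l: "l \<in> L" "phi l vt = phi g0 ut" using Ltil by blast
  let ?b = "g0 \<cdot> gi l"
  have bG: "?b \<in> G" using mul_G gi_G g0 L_G l by blast
  have "phi ?b ut = phi (gi l) (phi g0 ut)" using phi_mul g0 gi_G L_G l by simp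
  also have "\<dots> = vt" using l(2)[symmetric] phi_inv1[OF L_G[OF l(1)]] by simp
  finally have 1: "phi ?b ut = vt" .
  have "phi ?b vt = phi (gi l) ut" using phi_mul g0 gi_G L_G l g0 t by simp
  also have "\<dots> = ut" using subgroup.m_inv_closed[OF Lsub l(1)] L_fix by simp
  finally show ?thesis using 1 bG by blast
qed

lemma bt: "bt \<in> G" "phi bt ut = vt" "phi bt vt = ut"
  using someI_ex[OF bt_ex] unfolding bt_def by blast+

lemma bt_u: "bt u = v" using phi_p[OF bt(1) ut(1)] bt(2) ut(2) vt(2) by simp
lemma bt_v: "bt v = u" using phi_p[OF bt(1) vt_Vt] bt(3) ut(2) vt(2) by simp

lemma bbL: "bt \<cdot> bt \<in> L"
  using phi_mul[OF bt(1) bt(1)] bt mul_G by (simp add: L_def)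

lemma idx2: "card (rcosets\<^bsub>(pgrp G)\<lparr>carrier := H\<rparr>\<^esub> L) = 2"
proof -
  have "card (rcosets\<^bsub>(pgrp G)\<lparr>carrier := H\<rparr>\<^esub> L) = card ((\<lambda>h. phi h ut) ` H)"
    by (rule Gr.index_card[OF H_sub Lsub LH]) (use Lcos H_G in blast)
  moreover have "(\<lambda>h. phi h ut) ` H = {ut, c ut}"
  proof
    show "(\<lambda>h. phi h ut) ` H \<subseteq> {ut, c ut}" using H_fib by blast
    have "ut \<in> (\<lambda>h. phi h ut) ` H" using phi_id one_G
      by (auto simp: stabilizer_def intro!: image_eqI[where x=id])
    moreover have "c ut \<in> (\<lambda>h. phi h ut) ` H"
    proof -
      obtain \<tau> where t: "\<tau> \<in> Gb" "\<tau> ut = c ut" using Gb(2) ut(1) c_Vt by blast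
      obtain g where g: "g \<in> G" "phi g = \<tau>" using phi_surj[OF t(1)] by blast
      have "g u = u" using phi_p[OF g(1) ut(1)] g t c_p[OF ut(1)] ut(2) by simp
      then have "g \<in> H" using g(1) by (simp add: stabilizer_def)
      moreover have "c ut = phi g ut" using g t by simp
      ultimately show ?thesis by blast
    qed
    ultimately show "{ut, c ut} \<subseteq> (\<lambda>h. phi h ut) ` H" by blast
  qed
  moreover have "card {ut, c ut} = 2" using c_ne[OF ut(1)] by simp
  ultimately show ?thesis by simp
qed

lemma conj_mem: "m \<in> G \<Longrightarrow> m \<in> conj_sub G L bt \<longleftrightarrow> bt \<cdot> m \<cdot> gi bt \<in> L"
proof
  assume m: "m \<in> G" and "m \<in> conj_sub G L bt"
  then obtain l where l: "l \<in> L" "m = gi bt \<cdot> l \<cdot> bt" by (auto simp: conj_sub_def)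
  have "bt \<cdot> m \<cdot> gi bt = l" using l bt(1) L_G[OF l(1)] by (intro ext) (simp add: gs)
  then show "bt \<cdot> m \<cdot> gi bt \<in> L" using l by simp
next
  assume m: "m \<in> G" and "bt \<cdot> m \<cdot> gi bt \<in> L"
  moreover have "m = gi bt \<cdot> (bt \<cdot> m \<cdot> gi bt) \<cdot> bt" using m bt(1) by (intro ext) (simp add: gs)
  ultimately show "m \<in> conj_sub G L bt" by (auto simp: conj_sub_def)
qed

lemma conj_vt: "m \<in> G \<Longrightarrow> bt \<cdot> m \<cdot> gi bt \<in> L \<longleftrightarrow> phi m vt = vt"
proof -
  assume m: "m \<in> G"
  have "bt \<cdot> m \<cdot> gi bt \<in> L \<longleftrightarrow> phi (bt \<cdot> m) ut = phi bt ut" using Lcos mul_G m bt(1) by blast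
  also have "\<dots> \<longleftrightarrow> phi m vt = vt" using phi_mul bt m by simp
  finally show ?thesis .
qed

lemma idx3: "card (rcosets\<^bsub>(pgrp G)\<lparr>carrier := L\<rparr>\<^esub> (conj_sub G L bt \<inter> L)) = 3"
proof -
  have K: "subgroup (conj_sub G L bt \<inter> L) (pgrp G)"
    by (rule Gr.subgroups_Inter_pair[OF conj_sub_sub[OF bt(1) Lsub] Lsub])
  have "card (rcosets\<^bsub>(pgrp G)\<lparr>carrier := L\<rparr>\<^esub> (conj_sub G L bt \<inter> L)) = card ((\<lambda>l. phi l vt) ` L)"
  proof (rule Gr.index_card[OF Lsub K])
    show "conj_sub G L bt \<inter> L \<subseteq> L" by blast
    show "\<forall>a\<in>L. \<forall>b\<in>L. a \<cdot> gi b \<in> conj_sub G L bt \<inter> L \<longleftrightarrow> phi a vt = phi b vt"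
    proof (intro ballI)
      fix a b assume a: "a \<in> L" and b: "b \<in> L"
      have aG: "a \<in> G" and bG: "b \<in> G" using a b L_G by blast+
      have abL: "a \<cdot> gi b \<in> L" using a b subgroup.m_closed[OF Lsub] subgroup.m_inv_closed[OF Lsub] by simp
      have "a \<cdot> gi b \<in> conj_sub G L bt \<longleftrightarrow> phi (a \<cdot> gi b) vt = vt"
        using conj_mem conj_vt mul_G gi_G aG bG by simp
      also have "\<dots> \<longleftrightarrow> phi (gi b) (phi a vt) = vt" using phi_mul aG gi_G bG by simp
      also have "\<dots> \<longleftrightarrow> phi a vt = phi b vt" using phi_inv1[OF bG] phi_inv2[OF bG] by metis
      finally show "a \<cdot> gi b \<in> conj_sub G L bt \<inter> L \<longleftrightarrow> phi a vt = phi b vt" using abL by blast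
    qed
  qed
  also have "\<dots> = card (nbhd Et ut)" using orbit_vt by simp
  also have "\<dots> = card (nbhd E (p ut))" using p_nb[OF ut(1)] bij_betw_same_card by blast
  also have "\<dots> = 3" using nb_card uV ut(2) by simp
  finally show ?thesis .
qed

end

context condB
begin

lemma gi_mul2: "a \<in> G \<Longrightarrow> d \<in> G \<Longrightarrow> gi (a \<cdot> d) = gi d \<cdot> gi a"
  using Gr.inv_mult_group by simp

lemma ins_G: "insert bt L \<subseteq> carrier (pgrp G)" using bt(1) L_G by auto

lemma gen_G: "generate (pgrp G) (insert bt L) \<subseteq> G"
  using Gr.generate_incl[OF ins_G] by simp

lemma reach: "Et\<^sup>*\<^sup>* ut x \<Longrightarrow> \<exists>k\<in>generate (pgrp G) (insert bt L). phi k ut = x"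
proof (induction rule: rtranclp_induct)
  case base
  have "\<one>\<^bsub>pgrp G\<^esub> \<in> generate (pgrp G) (insert bt L)" by (rule generate.one)
  then have "id \<in> generate (pgrp G) (insert bt L)" using one_eq by simp
  moreover have "phi id ut = ut" using phi_id by simp
  ultimately show ?case by blast
next
  case (step y z)
  obtain k where k: "k \<in> generate (pgrp G) (insert bt L)" "phi k ut = y" using step.IH by blast
  have kG: "k \<in> G" using gen_G k(1) by blast
  let ?y' = "phi (gi k) z"
  have "Et (phi (gi k) y) ?y'" using phi_adj[OF gi_G[OF kG] step.hyps(2)] .
  then have "?y' \<in> nbhd Et ut" using k(2)[symmetric] phi_inv1[OF kG] by (simp add: nbhd_def)
  then obtain l where l: "l \<in> L" "phi l vt = ?y'" using Ltil by blast
  have lG: "l \<in> G" using L_G l(1) .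
  have "phi (bt \<cdot> l \<cdot> k) ut = phi k (phi l (phi bt ut))" using phi_mul bt(1) lG kG mul_G by simp
  also have "\<dots> = z" using bt(2) l(2) phi_inv2[OF kG] by simp
  finally have e: "phi (bt \<cdot> l \<cdot> k) ut = z" .
  have "bt \<in> generate (pgrp G) (insert bt L)" "l \<in> generate (pgrp G) (insert bt L)"
    using l(1) by (auto intro: generate.incl)
  then have "bt \<cdot> l \<in> generate (pgrp G) (insert bt L)" by (rule generate.eng)
  then have "bt \<cdot> l \<cdot> k \<in> generate (pgrp G) (insert bt L)" using k(1) by (rule generate.eng)
  then show ?case using e by blast
qed

lemma genB: "generate (pgrp G) (insert bt L) = G"
proof
  show "generate (pgrp G) (insert bt L) \<subseteq> G" by (rule gen_G)
  show "G \<subseteq> generate (pgrp G) (insert bt L)"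
  proof
    fix g assume g: "g \<in> G"
    have pth: "Et\<^sup>*\<^sup>* ut (phi g ut)" by (rule path[OF ut(1) phi_Vt[OF g ut(1)]])
    obtain k where k: "k \<in> generate (pgrp G) (insert bt L)" "phi k ut = phi g ut"
      using reach[OF pth] by blast
    have kG: "k \<in> G" using gen_G k(1) by blast
    have m: "g \<cdot> gi k \<in> L" using Lcos[OF g kG] k(2) by simp
    have "g \<cdot> gi k \<in> generate (pgrp G) (insert bt L)" by (rule generate.incl) (use m in simp)
    then have "(g \<cdot> gi k) \<cdot> k \<in> generate (pgrp G) (insert bt L)" using k(1) by (rule generate.eng)
    moreover have "(g \<cdot> gi k) \<cdot> k = g" using g kG by (intro ext) (simp add: gs)
    ultimately show "g \<in> generate (pgrp G) (insert bt L)" by simp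
  qed
qed

lemma ccB: "cover_condition G u v bt L"
  unfolding cover_condition_def sub_index_def
  using bt(1) bt_u bt_v Lsub LH idx2 bbL genB idx3 by blast

lemma dc_eq: "double_coset G L bt = {l \<cdot> bt \<cdot> l' | l l'. l \<in> L \<and> l' \<in> L}"
  by (auto simp: double_coset_def set_mult_def)

lemma rep: "x \<in> Vt \<Longrightarrow> \<exists>g\<in>G. phi g ut = x"
proof -
  assume x: "x \<in> Vt"
  obtain \<tau> where t: "\<tau> \<in> Gb" "\<tau> ut = x" using Gb(2) ut(1) x by blast
  then show ?thesis using phi_surj by blast
qed

lemma rc: "g \<in> G \<Longrightarrow> h \<in> G \<Longrightarrow> L #>\<^bsub>pgrp G\<^esub> g = L #>\<^bsub>pgrp G\<^esub> h \<longleftrightarrow> phi g ut = phi h ut"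
  using Gr.rcos_eq_iff[OF Lsub] Lcos by simp

definition fco where "fco x = L #>\<^bsub>pgrp G\<^esub> (SOME g. g \<in> G \<and> phi g ut = x)"

lemma fco: "g \<in> G \<Longrightarrow> fco (phi g ut) = L #>\<^bsub>pgrp G\<^esub> g"
proof -
  assume g: "g \<in> G"
  have "\<exists>h. h \<in> G \<and> phi h ut = phi g ut" using g by blast
  then have s: "(SOME h. h \<in> G \<and> phi h ut = phi g ut) \<in> G \<and>
      phi (SOME h. h \<in> G \<and> phi h ut = phi g ut) ut = phi g ut" by (rule someI_ex)
  then show ?thesis unfolding fco_def using rc g by blast
qed

lemma isoB: "graph_iso Vt Et (cos_vertices G L) (cos_adj G L (double_coset G L bt))"
  unfolding graph_iso_def
proof (intro exI conjI)
  show "bij_betw fco Vt (cos_vertices G L)"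
    unfolding bij_betw_def cos_vertices_def
  proof (intro conjI)
    show "inj_on fco Vt"
    proof (rule inj_onI)
      fix x y assume x: "x \<in> Vt" and y: "y \<in> Vt" and e: "fco x = fco y"
      obtain g where g: "g \<in> G" "phi g ut = x" using rep x by blast
      obtain h where h: "h \<in> G" "phi h ut = y" using rep y by blast
      show "x = y" using e g h fco rc by metis
    qed
    show "fco ` Vt = rcosets\<^bsub>pgrp G\<^esub> L"
    proof
      show "fco ` Vt \<subseteq> rcosets\<^bsub>pgrp G\<^esub> L"
      proof
        fix R assume "R \<in> fco ` Vt"
        then obtain x where x: "x \<in> Vt" "R = fco x" by blast
        obtain g where g: "g \<in> G" "phi g ut = x" using rep x(1) by blast
        have "R = L #>\<^bsub>pgrp G\<^esub> g" using x(2) g(2)[symmetric] fco[OF g(1)] by simp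
        then show "R \<in> rcosets\<^bsub>pgrp G\<^esub> L"
          using Gr.rcosetsI[of L g] subgroup.subset[OF Lsub] g by simp
      qed
      show "rcosets\<^bsub>pgrp G\<^esub> L \<subseteq> fco ` Vt"
      proof
        fix R assume "R \<in> rcosets\<^bsub>pgrp G\<^esub> L"
        then obtain g where g: "g \<in> G" "R = L #>\<^bsub>pgrp G\<^esub> g" by (auto simp: RCOSETS_def)
        then have "R = fco (phi g ut)" using fco by simp
        then show "R \<in> fco ` Vt" using phi_Vt[OF g(1) ut(1)] by blast
      qed
    qed
  qed
  show "\<forall>x\<in>Vt. \<forall>y\<in>Vt. Et x y \<longleftrightarrow> cos_adj G L (double_coset G L bt) (fco x) (fco y)"
  proof (intro ballI)
    fix x y assume x: "x \<in> Vt" and y: "y \<in> Vt"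
    obtain g where g: "g \<in> G" "phi g ut = x" using rep x by blast
    obtain h where h: "h \<in> G" "phi h ut = y" using rep y by blast
    show "Et x y \<longleftrightarrow> cos_adj G L (double_coset G L bt) (fco x) (fco y)"
    proof
      assume e: "Et x y"
      let ?w = "phi (gi g) y"
      have "Et (phi (gi g) x) ?w" using phi_adj[OF gi_G[OF g(1)] e] .
      then have "?w \<in> nbhd Et ut" using g(2)[symmetric] phi_inv1[OF g(1)] by (simp add: nbhd_def)
      then obtain l where l: "l \<in> L" "phi l vt = ?w" using Ltil by blast
      have lG: "l \<in> G" using L_G l(1) .
      have "phi (h \<cdot> gi g) ut = ?w" using phi_mul h g gi_G by simp
      moreover have "phi (bt \<cdot> l) ut = phi l vt" using phi_mul bt lG by simp
      ultimately have "phi (h \<cdot> gi g) ut = phi (bt \<cdot> l) ut" using l(2) by simp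
      then have m: "(h \<cdot> gi g) \<cdot> gi (bt \<cdot> l) \<in> L" using Lcos h g gi_G mul_G bt(1) lG by simp
      have de: "((h \<cdot> gi g) \<cdot> gi (bt \<cdot> l)) \<cdot> bt \<cdot> l = h \<cdot> gi g"
        using h g bt(1) lG by (intro ext) (simp add: gs gi_mul2 gi_G)
      have "h \<cdot> gi g \<in> double_coset G L bt" unfolding dc_eq using m l(1) de[symmetric] by blast
      moreover have "(h \<cdot> gi g) \<cdot> g = h" using h g by (intro ext) (simp add: gs)
      ultimately show "cos_adj G L (double_coset G L bt) (fco x) (fco y)"
        unfolding cos_adj_def using g h fco by (metis)
    next
      assume "cos_adj G L (double_coset G L bt) (fco x) (fco y)"
      then obtain g0 d where g0: "g0 \<in> G" and d: "d \<in> double_coset G L bt"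
        and e1: "fco x = L #>\<^bsub>pgrp G\<^esub> g0" and e2: "fco y = L #>\<^bsub>pgrp G\<^esub> (d \<cdot> g0)"
        unfolding cos_adj_def by blast
      obtain l1 l2 where l: "l1 \<in> L" "l2 \<in> L" "d = l1 \<cdot> bt \<cdot> l2" using d unfolding dc_eq by blast
      have lG: "l1 \<in> G" "l2 \<in> G" using L_G l by blast+
      have dG: "d \<in> G" using l(3) lG bt(1) mul_G by simp
      have x0: "x = phi g0 ut" using e1 fco g rc g0 by metis
      have y0: "y = phi (d \<cdot> g0) ut" using e2 fco h rc mul_G[OF dG g0] by metis
      have "phi (d \<cdot> g0) ut = phi g0 (phi l2 (phi bt (phi l1 ut)))"
        unfolding l(3) using phi_mul lG bt(1) g0 mul_G by simp
      also have "\<dots> = phi g0 (phi l2 vt)" using L_fix[OF l(1)] bt(2) by simp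
      finally have y1: "y = phi g0 (phi l2 vt)" using y0 by simp
      have "Et ut (phi l2 vt)" using phi_adj[OF lG(2) vt(1)] L_fix[OF l(2)] by simp
      then have "Et (phi g0 ut) (phi g0 (phi l2 vt))" by (rule phi_adj[OF g0])
      then show "Et x y" using x0 y1 by simp
    qed
  qed
qed

lemma mainB: "\<exists>b L. cover_condition G u v b L
    \<and> graph_iso Vt Et (cos_vertices G L) (cos_adj G L (double_coset G L b))"
  using ccB isoB by blast

end

theorem theorem4p2:
  fixes V :: "'v set" and E :: "'v \<Rightarrow> 'v \<Rightarrow> bool"
    and G :: "('v \<Rightarrow> 'v) set" and u v :: 'v and s :: nat
  assumes "sgraph V E" and "connected_graph V E" and "cubic V E"
    and "E u v"
    and "aut_group V E G"
    and "s \<in> {2, 3, 5}"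
    and "s_regular V E s G"
  shows "((\<exists>(Vt :: ('v \<times> bool) set) Et p. good_cover Vt Et V E G p)
            \<longleftrightarrow> (\<exists>b L. cover_condition G u v b L))
       \<and> (\<forall>(Vt :: 'w set) Et p. good_cover Vt Et V E G p \<longrightarrow>
            (\<exists>b L. cover_condition G u v b L
               \<and> graph_iso Vt Et (cos_vertices G L) (cos_adj G L (double_coset G L b))))"
proof -
  have cg: "cgraph V E G u v s" unfolding cgraph_def using assms by blast
  have B: "\<And>(Vt :: 't set) Et p. good_cover Vt Et V E G p \<Longrightarrow>
            (\<exists>b L. cover_condition G u v b L
               \<and> graph_iso Vt Et (cos_vertices G L) (cos_adj G L (double_coset G L b)))"
  proof -
    fix Vt :: "'t set" and Et p assume gc: "good_cover Vt Et V E G p"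
    have "condB V E G u v s Vt Et p" by (rule condB.intro[OF cg condB_axioms.intro[OF gc]])
    then show "\<exists>b L. cover_condition G u v b L
               \<and> graph_iso Vt Et (cos_vertices G L) (cos_adj G L (double_coset G L b))"
      by (rule condB.mainB)
  qed
  have A: "\<And>b L. cover_condition G u v b L \<Longrightarrow>
      \<exists>(Vt :: ('v \<times> bool) set) Et p. good_cover Vt Et V E G p"
  proof -
    fix b L assume cc: "cover_condition G u v b L"
    have ca: "condA V E G u v s b L" by (rule condA.intro[OF cg condA_axioms.intro[OF cc]])
    show "\<exists>(Vt :: ('v \<times> bool) set) Et p. good_cover Vt Et V E G p"
      using condA.good[OF ca] by blast
  qed
  show ?thesis
  proof (intro conjI iffI allI impI)
    assume "\<exists>(Vt :: ('v \<times> bool) set) Et p. good_cover Vt Et V E G p"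
    then obtain Vt :: "('v \<times> bool) set" and Et p where "good_cover Vt Et V E G p" by blast
    then show "\<exists>b L. cover_condition G u v b L" using B by blast
  next
    assume "\<exists>b L. cover_condition G u v b L"
    then show "\<exists>(Vt :: ('v \<times> bool) set) Et p. good_cover Vt Et V E G p" using A by blast
  next
    fix Vt :: "'w set" and Et p assume "good_cover Vt Et V E G p"
    then show "\<exists>b L. cover_condition G u v b L
               \<and> graph_iso Vt Et (cos_vertices G L) (cos_adj G L (double_coset G L b))"
      by (rule B)
  qed
qed


end
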